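(* Let $S\subset\mathbb{R}^3$ be a translation surface in Euclidean space, i.e. a surface admitting a parametrization $X(s,t)=\alpha(s)+\beta(t)$, $s\in I$, $t\in J$, where $\alpha:I\subset\mathbb{R}\to\mathbb{R}^3$ and $\beta:J\subset\mathbb{R}\to\mathbb{R}^3$ are smooth curves (the generating curves). (1) If $S$ has constant Gauss curvature $K=0$, then $S$ is a cylindrical surface. (2) If one of the generating curves $\alpha$ or $\beta$ is planar (contained in a plane), then $S$ does not have constant Gauss curvature $K\neq 0$; that is, there is no translation surface with constant nonzero Gauss curvature having a planar generating curve.
   Context: Euclidean space $\mathbb{R}^3$ with its standard metric. A cylindrical surface is a ruled surface whose rulings are all parallel to a fixed direction. *)

theory Defs
  imports "HOL-Analysis.Analysis"
begin

definition smooth_curve_on :: "real set \<Rightarrow> (real \<Rightarrow> real^3) \<Rightarrow> bool" where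
  "smooth_curve_on I f \<longleftrightarrow>
     (\<exists>D :: nat \<Rightarrow> real \<Rightarrow> real^3. (\<forall>x\<in>I. D 0 x = f x) \<and>
        (\<forall>k. \<forall>x\<in>I. (D k has_vector_derivative D (Suc k) x) (at x)))"

definition Xs :: "(real \<Rightarrow> real \<Rightarrow> real^3) \<Rightarrow> real \<Rightarrow> real \<Rightarrow> real^3" where
  "Xs X s t = vector_derivative (\<lambda>u. X u t) (at s)"
definition Xt :: "(real \<Rightarrow> real \<Rightarrow> real^3) \<Rightarrow> real \<Rightarrow> real \<Rightarrow> real^3" where
  "Xt X s t = vector_derivative (\<lambda>v. X s v) (at t)"

definition unit_normal :: "(real \<Rightarrow> real \<Rightarrow> real^3) \<Rightarrow> real \<Rightarrow> real \<Rightarrow> real^3" where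
  "unit_normal X s t = (1 / norm (cross3 (Xs X s t) (Xt X s t))) *\<^sub>R cross3 (Xs X s t) (Xt X s t)"

definition gauss_curvature :: "(real \<Rightarrow> real \<Rightarrow> real^3) \<Rightarrow> real \<Rightarrow> real \<Rightarrow> real" where
  "gauss_curvature X s t =
     (let E = Xs X s t \<bullet> Xs X s t; F = Xs X s t \<bullet> Xt X s t; G = Xt X s t \<bullet> Xt X s t;
          n = unit_normal X s t;
          L = Xs (Xs X) s t \<bullet> n; M = Xt (Xs X) s t \<bullet> n; N = Xt (Xt X) s t \<bullet> n
      in (L * N - M\<^sup>2) / (E * G - F\<^sup>2))"

definition regular_param :: "(real \<Rightarrow> real \<Rightarrow> real^3) \<Rightarrow> real set \<Rightarrow> real set \<Rightarrow> bool" where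
  "regular_param X I J \<longleftrightarrow> (\<forall>s\<in>I. \<forall>t\<in>J. cross3 (Xs X s t) (Xt X s t) \<noteq> 0)"

definition cylindrical_surface :: "(real^3) set \<Rightarrow> bool" where
  "cylindrical_surface S \<longleftrightarrow>
     (\<exists>v. v \<noteq> 0 \<and> (\<forall>p\<in>S. \<exists>e>0. \<forall>w. \<bar>w\<bar> < e \<longrightarrow> p + w *\<^sub>R v \<in> S))"

definition planar_curve :: "real set \<Rightarrow> (real \<Rightarrow> real^3) \<Rightarrow> bool" where
  "planar_curve I f \<longleftrightarrow> (\<exists>n d. n \<noteq> 0 \<and> (\<forall>x\<in>I. n \<bullet> f x = d))"

end

theory Submission
  imports Defs "HOL-Computational_Algebra.Polynomial"
begin
lemma cross_cross_expand: "cross3 x (cross3 y z) = (x \<bullet> z) *\<^sub>R y - (x \<bullet> y) *\<^sub>R z" for x y z :: "real^3"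
  by (simp add: cross3_simps) (auto simp: vec_eq_iff forall_3 algebra_simps)

lemma triple_cyc: "x \<bullet> cross3 y z = y \<bullet> cross3 z x" for x y z :: "real^3"
  by (simp add: cross3_simps)

lemma lagrange: "(x \<bullet> x) * (y \<bullet> y) - (x \<bullet> y)^2 = cross3 x y \<bullet> cross3 x y" for x y :: "real^3"
  by (simp add: cross3_simps power2_eq_square)

lemma gauss_formula:
  fixes \<alpha> \<beta> a A b B :: "real \<Rightarrow> real^3"
  assumes oI: "open I" and oJ: "open J" and s: "s \<in> I" and t: "t \<in> J"
    and da: "\<And>x. x \<in> I \<Longrightarrow> (\<alpha> has_vector_derivative a x) (at x)"
    and dA: "\<And>x. x \<in> I \<Longrightarrow> (a has_vector_derivative A x) (at x)"
    and db: "\<And>x. x \<in> J \<Longrightarrow> (\<beta> has_vector_derivative b x) (at x)"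
    and dB: "\<And>x. x \<in> J \<Longrightarrow> (b has_vector_derivative B x) (at x)"
  shows "gauss_curvature (\<lambda>s t. \<alpha> s + \<beta> t) s t =
      (A s \<bullet> cross3 (a s) (b t)) * (B t \<bullet> cross3 (a s) (b t)) / (norm (cross3 (a s) (b t)))^4"
    and "Xs (\<lambda>s t. \<alpha> s + \<beta> t) s t = a s" and "Xt (\<lambda>s t. \<alpha> s + \<beta> t) s t = b t"
proof -
  define X where "X = (\<lambda>s t. \<alpha> s + \<beta> t)"
  have Xs1: "Xs X u v = a u" if "u \<in> I" for u v
    unfolding Xs_def X_def
    by (rule vector_derivative_at) (use has_vector_derivative_add[OF da[OF that] has_vector_derivative_const[of "\<beta> v"]] in simp)
  have Xt1: "Xt X u v = b v" if "v \<in> J" for u v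
    unfolding Xt_def X_def
    by (rule vector_derivative_at) (use has_vector_derivative_add[OF has_vector_derivative_const[of "\<alpha> u"] db[OF that]] in simp)
  have Xss: "Xs (Xs X) s t = A s"
    unfolding Xs_def[of "Xs X"]
    by (rule vector_derivative_at, rule has_vector_derivative_transform_within_open[OF dA[OF s] oI s])
       (simp add: Xs1)
  have Xst: "Xt (Xs X) s t = 0"
  proof -
    have "Xs X s = (\<lambda>v. a s)" using Xs1[OF s] by auto
    then show ?thesis unfolding Xt_def[of "Xs X"] by simp
  qed
  have Xtt: "Xt (Xt X) s t = B t"
    unfolding Xt_def[of "Xt X"]
    by (rule vector_derivative_at, rule has_vector_derivative_transform_within_open[OF dB[OF t] oJ t])
       (simp add: Xt1)
  define P where "P = cross3 (a s) (b t)"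
  have EG: "(a s \<bullet> a s) * (b t \<bullet> b t) - (a s \<bullet> b t)^2 = (norm P)^2"
    by (simp add: lagrange P_def power2_norm_eq_inner)
  show "gauss_curvature (\<lambda>s t. \<alpha> s + \<beta> t) s t =
      (A s \<bullet> cross3 (a s) (b t)) * (B t \<bullet> cross3 (a s) (b t)) / (norm (cross3 (a s) (b t)))^4"
    unfolding X_def[symmetric] gauss_curvature_def Let_def unit_normal_def
    using EG
    apply (simp add: Xss Xst Xtt Xs1[OF s] Xt1[OF t] P_def[symmetric] power2_eq_square)
    apply (cases "norm P = 0")
     apply simp
    apply (simp add: field_simps power2_eq_square power4_eq_xxxx)
    done
  show "Xs (\<lambda>s t. \<alpha> s + \<beta> t) s t = a s" "Xt (\<lambda>s t. \<alpha> s + \<beta> t) s t = b t"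
    using Xs1[OF s] Xt1[OF t] by (simp_all add: X_def)
qed

lemma vd_inner:
  fixes f g :: "real \<Rightarrow> 'a::real_inner"
  assumes "(f has_vector_derivative f') (at x)" "(g has_vector_derivative g') (at x)"
  shows "((\<lambda>x. f x \<bullet> g x) has_real_derivative (f x \<bullet> g' + f' \<bullet> g x)) (at x)"
proof -
  have "((\<lambda>x. f x \<bullet> g x) has_derivative (\<lambda>h. f x \<bullet> (h *\<^sub>R g') + (h *\<^sub>R f') \<bullet> g x)) (at x)"
    using assms unfolding has_vector_derivative_def by (intro has_derivative_inner)
  then show ?thesis unfolding has_field_derivative_def
    by (rule has_derivative_eq_rhs) (auto simp: algebra_simps)
qed

lemma vd_inner_const:
  fixes f :: "real \<Rightarrow> 'a::real_inner"
  assumes "(f has_vector_derivative f') (at x)"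
  shows "((\<lambda>x. c \<bullet> f x) has_real_derivative (c \<bullet> f')) (at x)"
  using vd_inner[OF has_vector_derivative_const[of c] assms] by simp

lemma dir_const:
  fixes f :: "real \<Rightarrow> real^3"
  assumes S: "convex S" "open S"
    and d: "\<And>x. x \<in> S \<Longrightarrow> (f has_vector_derivative f' x) (at x)"
    and nz: "\<And>x. x \<in> S \<Longrightarrow> f x \<noteq> 0"
    and par: "\<And>x. x \<in> S \<Longrightarrow> cross3 (f x) (f' x) = 0"
    and xy: "x \<in> S" "y \<in> S"
  shows "cross3 (f x) (f y) = 0"
proof -
  define u where "u = (\<lambda>x. (inverse (sqrt (f x \<bullet> f x))) *\<^sub>R f x)"
  have du: "(u has_derivative (\<lambda>h. 0)) (at x within S)" if x: "x \<in> S" for x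
  proof -
    have r: "f x \<bullet> f x > 0" using nz[OF x] by simp
    have ff: "f' x = ((f x \<bullet> f' x) / (f x \<bullet> f x)) *\<^sub>R f x"
    proof -
      have "cross3 (f x) (cross3 (f x) (f' x)) = 0" using par[OF x] by simp
      then have "(f x \<bullet> f' x) *\<^sub>R f x = (f x \<bullet> f x) *\<^sub>R f' x"
        by (simp add: cross_cross_expand)
      then have e: "(f x \<bullet> f x) *\<^sub>R f' x = (f x \<bullet> f' x) *\<^sub>R f x" by simp
      have "f' x = (1/(f x \<bullet> f x)) *\<^sub>R ((f x \<bullet> f x) *\<^sub>R f' x)" using r by simp
      also have "\<dots> = (1/(f x \<bullet> f x)) *\<^sub>R ((f x \<bullet> f' x) *\<^sub>R f x)" by (simp only: e)
      finally show ?thesis by simp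
    qed
    have dr: "((\<lambda>x. f x \<bullet> f x) has_real_derivative (f x \<bullet> f' x + f' x \<bullet> f x)) (at x)"
      by (rule vd_inner[OF d[OF x] d[OF x]])
    define R where "R = f x \<bullet> f x"
    define R' where "R' = f x \<bullet> f' x + f' x \<bullet> f x"
    have ds: "((\<lambda>x. sqrt (f x \<bullet> f x)) has_real_derivative (inverse (sqrt R) / 2 * R')) (at x)"
      unfolding R_def R'_def by (rule DERIV_chain2[OF DERIV_real_sqrt[OF r] dr])
    have dq: "((\<lambda>x. inverse (sqrt (f x \<bullet> f x))) has_real_derivative
        (- ((inverse (sqrt R) / 2 * R') * inverse (sqrt R ^ Suc (Suc 0))))) (at x)"
      using DERIV_inverse_fun[OF ds] r unfolding R_def by simp
    have "(u has_vector_derivative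
        ((inverse (sqrt R)) *\<^sub>R f' x +
         (- ((inverse (sqrt R) / 2 * R') * inverse (sqrt R ^ Suc (Suc 0)))) *\<^sub>R f x)) (at x)"
      using has_vector_derivative_scaleR[OF dq d[OF x]] unfolding u_def R_def by simp
    moreover have "(inverse (sqrt R)) *\<^sub>R f' x +
         (- ((inverse (sqrt R) / 2 * R') * inverse (sqrt R ^ Suc (Suc 0)))) *\<^sub>R f x = 0"
    proof -
      have rr: "R > 0" using r R_def by simp
      have s2: "sqrt R ^ 2 = R" using rr by simp
      have sp: "sqrt R > 0" using rr by simp
      have R': "R' = 2 * (f x \<bullet> f' x)" unfolding R'_def by (simp add: inner_commute)
      show ?thesis
        apply (subst ff)
        unfolding R_def[symmetric] R'
        using rr sp s2 by (simp add: field_simps power2_eq_square scaleR_left_distrib[symmetric])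
    qed
    ultimately have "(u has_vector_derivative 0) (at x)" by simp
    then show ?thesis unfolding has_vector_derivative_def
      by (auto intro: has_derivative_at_withinI)
  qed
  obtain c where c: "\<And>x. x \<in> S \<Longrightarrow> u x = c"
    using has_derivative_zero_constant[OF S(1) du] by blast
  have fx: "f z = sqrt (f z \<bullet> f z) *\<^sub>R c" if "z \<in> S" for z
    using c[OF that] nz[OF that] unfolding u_def by (auto simp: field_simps)
  show ?thesis
    by (subst fx[OF xy(1)], subst fx[OF xy(2)]) (simp add: cross_mult_left cross_mult_right)
qed

lemma avoid_ball:
  fixes f :: "'a::metric_space \<Rightarrow> 'b::t1_space"
  assumes "continuous_on S f" "open S" "x \<in> S" "f x \<noteq> c"
  shows "\<exists>e>0. ball x e \<subseteq> S \<and> (\<forall>y\<in>ball x e. f y \<noteq> c)"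
proof -
  obtain e1 where e1: "e1 > 0" "\<forall>y\<in>S. dist x y < e1 \<longrightarrow> f y \<noteq> c"
    using continuous_on_avoid[OF assms(1,3,4)] by blast
  obtain e2 where e2: "e2 > 0" "ball x e2 \<subseteq> S" using assms(2,3) open_contains_ball by blast
  show ?thesis using e1 e2 by (intro exI[of _ "min e1 e2"]) (auto simp: subset_eq)
qed

lemma deriv_zero_local:
  fixes f :: "real \<Rightarrow> real"
  assumes "open U" "x \<in> U" "\<And>y. y \<in> U \<Longrightarrow> f y = 0" "(f has_real_derivative D) (at x)"
  shows "D = 0"
proof -
  have "((\<lambda>y. 0) has_real_derivative D) (at x)"
    by (rule has_field_derivative_transform_within_open[OF assms(4,1,2)]) (simp add: assms(3))
  then show ?thesis using DERIV_const DERIV_unique by blast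
qed

lemma par_expand:
  fixes x y :: "real^3"
  assumes "cross3 x y = 0" "y \<noteq> 0"
  shows "x = ((x \<bullet> y) / (y \<bullet> y)) *\<^sub>R y"
proof -
  have "cross3 y (cross3 x y) = 0" using assms by simp
  then have e: "(y \<bullet> y) *\<^sub>R x = (y \<bullet> x) *\<^sub>R y" by (simp add: cross_cross_expand)
  have yy: "y \<bullet> y \<noteq> 0" using assms by simp
  have "x = (1/(y \<bullet> y)) *\<^sub>R ((y \<bullet> y) *\<^sub>R x)" using yy by simp
  also have "\<dots> = (1/(y \<bullet> y)) *\<^sub>R ((y \<bullet> x) *\<^sub>R y)" by (simp only: e)
  finally show ?thesis by (simp add: inner_commute)
qed

lemma par_trans:
  fixes x y z :: "real^3"
  assumes "cross3 x y = 0" "cross3 y z = 0" "y \<noteq> 0"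
  shows "cross3 x z = 0"
proof -
  have "cross3 z y = 0" using assms(2) cross_skew[of z y] by simp
  then have z: "z = ((z \<bullet> y) / (y \<bullet> y)) *\<^sub>R y" using par_expand assms(3) by blast
  have x: "x = ((x \<bullet> y) / (y \<bullet> y)) *\<^sub>R y" using par_expand assms(1,3) by blast
  show ?thesis by (subst x, subst z) (simp add: cross_mult_left cross_mult_right)
qed

lemma perp_two_par:
  fixes m a c :: "real^3"
  assumes "m \<bullet> a = 0" "m \<bullet> c = 0"
  shows "cross3 m (cross3 a c) = 0"
  using assms by (simp add: cross_cross_expand)

lemma step1:
  fixes a A b B :: "real \<Rightarrow> real^3"
  assumes oI: "open I" and dA: "\<And>x. x \<in> I \<Longrightarrow> (a has_vector_derivative A x) (at x)"
    and ca: "continuous_on I a" and cA: "continuous_on I A"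
    and oJ: "open J" and iJ: "is_interval J"
    and db: "\<And>x. x \<in> J \<Longrightarrow> (b has_vector_derivative B x) (at x)"
    and cb: "continuous_on J b" and bnz: "\<And>t. t \<in> J \<Longrightarrow> b t \<noteq> 0"
    and K0: "\<And>s t. s \<in> I \<Longrightarrow> t \<in> J \<Longrightarrow>
              (A s \<bullet> cross3 (a s) (b t)) * (B t \<bullet> cross3 (a s) (b t)) = 0"
    and s0: "s0 \<in> I" and n0: "cross3 (a s0) (A s0) \<noteq> 0"
    and t0: "t0 \<in> J" and m0: "cross3 (b t0) (B t0) \<noteq> 0"
  shows "\<forall>t\<in>J. cross3 (a s0) (A s0) \<bullet> b t = 0"
proof -
  define n where "n = cross3 (a s0) (A s0)"
  have i: "cross3 (b t) (B t) = 0" if t: "t \<in> J" and nb: "n \<bullet> b t \<noteq> 0" for t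
  proof -
    define m where "m = cross3 (b t) (B t)"
    have cphi: "continuous_on I (\<lambda>s. A s \<bullet> cross3 (a s) (b t))"
      by (intro continuous_intros cA continuous_on_cross ca)
    have "A s0 \<bullet> cross3 (a s0) (b t) = - (n \<bullet> b t)"
      unfolding n_def by (simp add: cross3_simps)
    then have "A s0 \<bullet> cross3 (a s0) (b t) \<noteq> 0" using nb by simp
    then obtain e where e: "e > 0" "ball s0 e \<subseteq> I" "\<forall>s\<in>ball s0 e. A s \<bullet> cross3 (a s) (b t) \<noteq> 0"
      using avoid_ball[OF cphi oI s0] by blast
    have am: "a s \<bullet> m = 0" if "s \<in> ball s0 e" for s
    proof -
      have "B t \<bullet> cross3 (a s) (b t) = 0" using K0[of s t] e that t by auto
      then show ?thesis unfolding m_def by (simp add: cross3_simps)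
    qed
    have "((\<lambda>s. m \<bullet> a s) has_real_derivative (m \<bullet> A s0)) (at s0)"
      by (rule vd_inner_const[OF dA[OF s0]])
    then have Am: "m \<bullet> A s0 = 0"
      using deriv_zero_local[of "ball s0 e" s0 "\<lambda>s. m \<bullet> a s" "m \<bullet> A s0"] e am
      by (auto simp: inner_commute)
    have am0: "m \<bullet> a s0 = 0" using am[of s0] e by (simp add: inner_commute)
    have mn: "cross3 m n = 0" unfolding n_def by (rule perp_two_par[OF am0 Am])
    have mb: "m \<bullet> b t = 0" unfolding m_def by (simp add: dot_cross_self)
    show ?thesis
    proof (rule ccontr)
      assume "cross3 (b t) (B t) \<noteq> 0"
      then have "m \<noteq> 0" by (simp add: m_def)
      have "cross3 n m = 0" using mn cross_skew[of n m] by simp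
      then have "n = ((n \<bullet> m) / (m \<bullet> m)) *\<^sub>R m" using par_expand \<open>m \<noteq> 0\<close> by blast
      then have "n \<bullet> b t = ((n \<bullet> m) / (m \<bullet> m)) * (m \<bullet> b t)"
        by (metis inner_scaleR_left)
      then show False using mb nb by simp
    qed
  qed
  show ?thesis
  proof (rule ccontr)
    assume "\<not> (\<forall>t\<in>J. cross3 (a s0) (A s0) \<bullet> b t = 0)"
    then obtain t1 where t1: "t1 \<in> J" "n \<bullet> b t1 \<noteq> 0" by (auto simp: n_def)
    define C where "C = {t \<in> J. cross3 (b t) (b t1) = 0}"
    have cl: "closedin (top_of_set J) C"
      unfolding C_def by (intro continuous_closedin_preimage_constant continuous_on_cross cb continuous_on_const)
    have opC: "open C"
    proof (rule openI)
      fix t assume tC: "t \<in> C"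
      then have tJ: "t \<in> J" and par: "cross3 (b t) (b t1) = 0" by (auto simp: C_def)
      have bt: "b t = ((b t \<bullet> b t1) / (b t1 \<bullet> b t1)) *\<^sub>R b t1"
        using par_expand[OF par bnz[OF t1(1)]] .
      have "(b t \<bullet> b t1) / (b t1 \<bullet> b t1) \<noteq> 0"
      proof
        assume "(b t \<bullet> b t1) / (b t1 \<bullet> b t1) = 0"
        then have "b t = 0" using bt by (metis scale_zero_left)
        then show False using bnz[OF tJ] by simp
      qed
      then have nbt: "n \<bullet> b t \<noteq> 0" using t1(2) by (subst bt) simp
      have cn: "continuous_on J (\<lambda>t. n \<bullet> b t)" by (intro continuous_intros cb)
      obtain e where e: "e > 0" "ball t e \<subseteq> J" "\<forall>y\<in>ball t e. n \<bullet> b y \<noteq> 0"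
        using avoid_ball[OF cn oJ tJ nbt] by blast
      have "cross3 (b y) (b t) = 0" if "y \<in> ball t e" for y
        by (rule dir_const[of "ball t e" b B]) (use e i db bnz that in auto)
      then have "cross3 (b y) (b t1) = 0" if "y \<in> ball t e" for y
        using par_trans[OF _ par bnz[OF tJ]] that by blast
      then show "\<exists>e>0. ball t e \<subseteq> C" using e by (auto simp: C_def)
    qed
    have op: "openin (top_of_set J) C" using opC by (simp add: openin_open_eq[OF oJ] C_def)
    have "C = J"
      using connected_clopen[THEN iffD1, OF is_interval_connected[OF iJ], rule_format, of C] op cl t1
      by (auto simp: C_def)
    then have "cross3 (b t0) (b t1) = 0" using t0 by (auto simp: C_def)
    then have "b t0 = ((b t0 \<bullet> b t1) / (b t1 \<bullet> b t1)) *\<^sub>R b t1" using par_expand bnz t1 by blast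
    moreover have "(b t0 \<bullet> b t1) / (b t1 \<bullet> b t1) \<noteq> 0"
      using calculation bnz[OF t0] by (metis scale_zero_left)
    ultimately have "n \<bullet> b t0 \<noteq> 0" using t1(2) by (metis inner_scaleR_right mult_eq_0_iff)
    then show False using i[OF t0] m0 by simp
  qed
qed

lemma const_on_interval:
  fixes f :: "real \<Rightarrow> 'b::real_normed_vector"
  assumes "is_interval I" "\<And>x. x \<in> I \<Longrightarrow> (f has_vector_derivative 0) (at x)" "x \<in> I" "y \<in> I"
  shows "f x = f y"
proof -
  have "\<exists>c. \<forall>x\<in>I. f x = c"
    using assms(2) unfolding has_vector_derivative_def
    by (intro has_derivative_zero_constant[OF is_interval_convex[OF assms(1)]])
       (auto intro: has_derivative_at_withinI)
  then show ?thesis using assms(3,4) by auto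
qed

lemma zero_from_frame:
  fixes n v r :: "real^3"
  assumes "n \<noteq> 0" "v \<noteq> 0" "n \<bullet> v = 0" "r \<bullet> v = 0" "r \<bullet> n = 0" "r \<bullet> cross3 n v = 0"
  shows "r = 0"
proof -
  have c: "cross3 r (cross3 n v) = 0" using assms by (simp add: cross_cross_expand)
  have "cross3 n v \<bullet> cross3 n v = (n \<bullet> n) * (v \<bullet> v)" using lagrange[of n v] assms(3) by simp
  moreover have "(n \<bullet> n) * (v \<bullet> v) > 0" using assms(1,2) by simp
  ultimately have "cross3 n v \<noteq> 0" by auto
  from par_expand[OF c this] assms(6) show ?thesis by simp
qed

lemma has_derivative_fst_comp:
  fixes \<alpha> :: "real \<Rightarrow> real^3"
  assumes "(\<alpha> has_vector_derivative a) (at s)"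
  shows "((\<lambda>x. \<alpha> (fst x)) has_derivative (\<lambda>h. fst h *\<^sub>R a)) (at (s, t))"
proof -
  have "((\<alpha> \<circ> fst) has_derivative ((\<lambda>h. h *\<^sub>R a) \<circ> fst)) (at (s,t))"
    by (rule diff_chain_at) (use assms in \<open>auto intro: derivative_intros simp: has_vector_derivative_def\<close>)
  then show ?thesis by (simp add: o_def)
qed

lemma has_derivative_snd_comp:
  fixes \<beta> :: "real \<Rightarrow> real^3"
  assumes "(\<beta> has_vector_derivative b) (at t)"
  shows "((\<lambda>x. \<beta> (snd x)) has_derivative (\<lambda>h. snd h *\<^sub>R b)) (at (s, t))"
proof -
  have "((\<beta> \<circ> snd) has_derivative ((\<lambda>h. h *\<^sub>R b) \<circ> snd)) (at (s,t))"
    by (rule diff_chain_at) (use assms in \<open>auto intro: derivative_intros simp: has_vector_derivative_def\<close>)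
  then show ?thesis by (simp add: o_def)
qed

lemma binet_cauchy: "(v \<bullet> a) * (e \<bullet> b) - (v \<bullet> b) * (e \<bullet> a) = cross3 v e \<bullet> cross3 a b" for v e a b :: "real^3"
  by (simp add: cross3_simps)

lemma inv2x2_aux:
  fixes p q r s y1 y2 D :: real
  assumes "D = p * s - q * r" "D \<noteq> 0"
  shows "p * ((s / D) * y1 - (q / D) * y2) + q * ((- r / D) * y1 + (p / D) * y2) = y1"
    and "r * ((s / D) * y1 - (q / D) * y2) + s * ((- r / D) * y1 + (p / D) * y2) = y2"
proof -
  have "p * ((s / D) * y1 - (q / D) * y2) + q * ((- r / D) * y1 + (p / D) * y2) = ((p * s - q * r) * y1) / D"
    using assms(2) by (simp add: divide_simps) (simp add: algebra_simps)
  then show "p * ((s / D) * y1 - (q / D) * y2) + q * ((- r / D) * y1 + (p / D) * y2) = y1"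
    using assms by simp
  have "r * ((s / D) * y1 - (q / D) * y2) + s * ((- r / D) * y1 + (p / D) * y2) = ((p * s - q * r) * y2) / D"
    using assms(2) by (simp add: divide_simps) (simp add: algebra_simps)
  then show "r * ((s / D) * y1 - (q / D) * y2) + s * ((- r / D) * y1 + (p / D) * y2) = y2"
    using assms by simp
qed

lemmas inv2x2 = inv2x2_aux[OF refl]

lemma plane_cyl:
  fixes \<alpha> \<beta> a b :: "real \<Rightarrow> real^3"
  assumes oI: "open I" and iI: "is_interval I" and oJ: "open J" and iJ: "is_interval J"
    and da: "\<And>x. x \<in> I \<Longrightarrow> (\<alpha> has_vector_derivative a x) (at x)"
    and db: "\<And>x. x \<in> J \<Longrightarrow> (\<beta> has_vector_derivative b x) (at x)"
    and n: "n \<noteq> 0" and na: "\<And>s. s \<in> I \<Longrightarrow> n \<bullet> a s = 0" and nb: "\<And>t. t \<in> J \<Longrightarrow> n \<bullet> b t = 0"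
    and reg: "\<And>s t. s \<in> I \<Longrightarrow> t \<in> J \<Longrightarrow> cross3 (a s) (b t) \<noteq> 0"
    and v: "v \<noteq> 0" "n \<bullet> v = 0"
  shows "cylindrical_surface ((\<lambda>(s, t). \<alpha> s + \<beta> t) ` (I \<times> J))"
  unfolding cylindrical_surface_def
proof (intro exI[of _ v] conjI v ballI)
  define e where "e = cross3 n v"
  define F where "F = (\<lambda>x::real\<times>real. \<alpha> (fst x) + \<beta> (snd x))"
  define \<Phi> where "\<Phi> = (\<lambda>x. (v \<bullet> F x, e \<bullet> F x))"
  have img: "(\<lambda>(s, t). \<alpha> s + \<beta> t) ` (I \<times> J) = F ` (I \<times> J)"
    unfolding F_def by (intro image_cong refl) auto
  have dF: "(F has_derivative (\<lambda>h. fst h *\<^sub>R a s + snd h *\<^sub>R b t)) (at (s,t))"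
    if "s \<in> I" "t \<in> J" for s t
    unfolding F_def
    by (intro has_derivative_add has_derivative_fst_comp has_derivative_snd_comp da db that)
  have dPhi: "(\<Phi> has_derivative (\<lambda>h. (v \<bullet> (fst h *\<^sub>R a s + snd h *\<^sub>R b t), e \<bullet> (fst h *\<^sub>R a s + snd h *\<^sub>R b t)))) (at (s,t))"
    if "s \<in> I" "t \<in> J" for s t
    unfolding \<Phi>_def
    by (intro has_derivative_Pair has_derivative_inner_right dF that)
  have contPhi: "continuous_on (I \<times> J) \<Phi>"
    by (rule continuous_at_imp_continuous_on) (auto intro: has_derivative_continuous dPhi)
  have cnst_a: "n \<bullet> \<alpha> x = n \<bullet> \<alpha> y" if "x \<in> I" "y \<in> I" for x y
    using const_on_interval[OF iI _ that, of "\<lambda>x. n \<bullet> \<alpha> x"]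
      vd_inner_const[OF da, of _ n] na
    by (simp add: has_real_derivative_iff_has_vector_derivative[symmetric])
  have cnst_b: "n \<bullet> \<beta> x = n \<bullet> \<beta> y" if "x \<in> J" "y \<in> J" for x y
    using const_on_interval[OF iJ _ that, of "\<lambda>x. n \<bullet> \<beta> x"]
      vd_inner_const[OF db, of _ n] nb
    by (simp add: has_real_derivative_iff_has_vector_derivative[symmetric])
  fix p assume "p \<in> (\<lambda>(s, t). \<alpha> s + \<beta> t) ` (I \<times> J)"
  then obtain s t where st: "s \<in> I" "t \<in> J" and p: "p = \<alpha> s + \<beta> t" by auto
  define as where "as = a s"
  define bt where "bt = b t"
  define \<Delta> where "\<Delta> = (v \<bullet> as) * (e \<bullet> bt) - (v \<bullet> bt) * (e \<bullet> as)"
  have ve: "cross3 v e = (v \<bullet> v) *\<^sub>R n" unfolding e_def using v by (simp add: cross_cross_expand inner_commute)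
  have nP: "n \<bullet> cross3 as bt \<noteq> 0"
  proof
    assume h: "n \<bullet> cross3 as bt = 0"
    have nb0: "n \<bullet> as = 0" "n \<bullet> bt = 0" unfolding as_def bt_def using na[OF st(1)] nb[OF st(2)] by auto
    have c1: "cross3 n (cross3 as bt) = 0" using nb0 by (simp add: cross_cross_expand)
    have "cross3 n (cross3 n (cross3 as bt)) = (n \<bullet> cross3 as bt) *\<^sub>R n - (n \<bullet> n) *\<^sub>R cross3 as bt"
      by (rule cross_cross_expand)
    with c1 h have "(n \<bullet> n) *\<^sub>R cross3 as bt = 0" by simp
    then show False using n reg[OF st] by (simp add: as_def bt_def)
  qed
  have D: "\<Delta> \<noteq> 0" unfolding \<Delta>_def binet_cauchy ve using v nP by simp
  define g' where "g' = (\<lambda>y::real\<times>real. (((e \<bullet> bt) / \<Delta>) * fst y - ((v \<bullet> bt) / \<Delta>) * snd y,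
                                      (- (e \<bullet> as) / \<Delta>) * fst y + ((v \<bullet> as) / \<Delta>) * snd y))"
  have blg: "bounded_linear g'" unfolding g'_def
    by (intro bounded_linear_Pair bounded_linear_add bounded_linear_sub bounded_linear_const_mult bounded_linear_fst bounded_linear_snd)
  have inv: "(\<lambda>h. (v \<bullet> (fst h *\<^sub>R as + snd h *\<^sub>R bt), e \<bullet> (fst h *\<^sub>R as + snd h *\<^sub>R bt))) \<circ> g' = id"
  proof (rule ext)
    fix y :: "real \<times> real"
    obtain y1 y2 where y: "y = (y1, y2)" by (cases y)
    show "((\<lambda>h. (v \<bullet> (fst h *\<^sub>R as + snd h *\<^sub>R bt), e \<bullet> (fst h *\<^sub>R as + snd h *\<^sub>R bt))) \<circ> g') y = id y"
      using D inv2x2[of "v \<bullet> as" "e \<bullet> bt" "v \<bullet> bt" "e \<bullet> as" y1 y2] unfolding g'_def \<Delta>_def y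
      by (simp add: inner_add_right) (simp add: mult.commute)
  qed
  have "\<Phi> (s,t) \<in> interior (\<Phi> ` (I \<times> J))"
    by (rule sussmann_open_mapping[OF open_Times[OF oI oJ] contPhi _ dPhi[OF st, folded as_def bt_def] blg inv])
       (use st open_Times[OF oI oJ] in \<open>auto simp: interior_open\<close>)
  then obtain \<epsilon> where \<epsilon>: "\<epsilon> > 0" "ball (\<Phi> (s,t)) \<epsilon> \<subseteq> \<Phi> ` (I \<times> J)" by (auto simp: mem_interior)
  have vv: "v \<bullet> v > 0" using v by simp
  show "\<exists>\<epsilon>>0. \<forall>w. \<bar>w\<bar> < \<epsilon> \<longrightarrow> p + w *\<^sub>R v \<in> (\<lambda>(s, t). \<alpha> s + \<beta> t) ` (I \<times> J)"
  proof (intro exI[of _ "\<epsilon> / (v \<bullet> v)"] conjI allI impI)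
    show "\<epsilon> / (v \<bullet> v) > 0" using \<epsilon> vv by simp
    fix w :: real assume w: "\<bar>w\<bar> < \<epsilon> / (v \<bullet> v)"
    have ev: "e \<bullet> v = 0" unfolding e_def by (simp add: dot_cross_self)
    have Pst: "\<Phi> (s,t) = (v \<bullet> p, e \<bullet> p)" unfolding \<Phi>_def F_def p by simp
    have "dist (\<Phi> (s,t)) (v \<bullet> p + w * (v \<bullet> v), e \<bullet> p) = sqrt ((w * (v \<bullet> v))^2)"
      unfolding Pst dist_Pair_Pair by (simp add: dist_real_def)
    also have "\<dots> = \<bar>w\<bar> * (v \<bullet> v)" using vv by (simp add: abs_mult)
    also have "\<dots> < \<epsilon>" using w vv by (simp add: pos_less_divide_eq)
    finally have "(v \<bullet> p + w * (v \<bullet> v), e \<bullet> p) \<in> ball (\<Phi> (s,t)) \<epsilon>" by simp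
    then have "(v \<bullet> p + w * (v \<bullet> v), e \<bullet> p) \<in> \<Phi> ` (I \<times> J)" by (rule subsetD[OF \<epsilon>(2)])
    then obtain x where x1: "x \<in> I \<times> J" and x2': "(v \<bullet> p + w * (v \<bullet> v), e \<bullet> p) = \<Phi> x" by (rule imageE)
    have x: "x \<in> I \<times> J" "\<Phi> x = (v \<bullet> p + w * (v \<bullet> v), e \<bullet> p)" using x1 x2' by simp_all
    define r where "r = F x - (p + w *\<^sub>R v)"
    have hx1: "v \<bullet> F x = v \<bullet> p + w * (v \<bullet> v)" and hx2: "e \<bullet> F x = e \<bullet> p"
      using x(2) unfolding \<Phi>_def prod_eq_iff fst_conv snd_conv by blast+
    have "v \<bullet> r = 0" using hx1 unfolding r_def by (simp add: inner_diff_right inner_add_right)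
    then have r1: "r \<bullet> v = 0" by (simp only: inner_commute)
    have "e \<bullet> r = 0" using hx2 ev unfolding r_def by (simp add: inner_diff_right inner_add_right)
    then have r2: "r \<bullet> e = 0" by (simp only: inner_commute)
    have r3: "r \<bullet> n = 0"
    proof -
      have "n \<bullet> F x = n \<bullet> p" using x(1) cnst_a[OF _ st(1), of "fst x"] cnst_b[OF _ st(2), of "snd x"]
        unfolding F_def p by (auto simp: inner_add_right mem_Times_iff)
      then have "n \<bullet> r = 0" unfolding r_def using v(2) by (simp add: inner_diff_right inner_add_right)
      then show ?thesis by (simp only: inner_commute)
    qed
    have "r = 0" by (rule zero_from_frame[OF n v r1 r3 r2[unfolded e_def]])
    then have "p + w *\<^sub>R v = F x" unfolding r_def by simp
    then show "p + w *\<^sub>R v \<in> (\<lambda>(s, t). \<alpha> s + \<beta> t) ` (I \<times> J)" using x(1) img by auto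
  qed
qed

lemma straight_cyl:
  fixes \<alpha> a A :: "real \<Rightarrow> real^3" and \<beta> :: "real \<Rightarrow> real^3"
  assumes oI: "open I" and iI: "is_interval I"
    and da: "\<And>x. x \<in> I \<Longrightarrow> (\<alpha> has_vector_derivative a x) (at x)"
    and dA: "\<And>x. x \<in> I \<Longrightarrow> (a has_vector_derivative A x) (at x)"
    and par: "\<And>x. x \<in> I \<Longrightarrow> cross3 (a x) (A x) = 0"
    and anz: "\<And>x. x \<in> I \<Longrightarrow> a x \<noteq> 0" and s0: "s0 \<in> I"
  shows "cylindrical_surface ((\<lambda>(s, t). \<alpha> s + \<beta> t) ` (I \<times> J))"
  unfolding cylindrical_surface_def
proof (intro exI[of _ "a s0"] conjI ballI)
  define v where "v = a s0"
  show "a s0 \<noteq> 0" using anz s0 by simp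
  then have vv: "v \<bullet> v > 0" by (simp add: v_def)
  have cv: "cross3 (a x) v = 0" if "x \<in> I" for x
    unfolding v_def by (rule dir_const[OF is_interval_convex[OF iI] oI dA anz par that s0])
  have ax: "a x = ((a x \<bullet> v) / (v \<bullet> v)) *\<^sub>R v" if "x \<in> I" for x
    using par_expand[OF cv[OF that]] vv by auto
  define h where "h = (\<lambda>x. \<alpha> x - ((v \<bullet> \<alpha> x) / (v \<bullet> v)) *\<^sub>R v)"
  have dh: "(h has_vector_derivative 0) (at x)" if x: "x \<in> I" for x
  proof -
    have d1: "((\<lambda>x. (v \<bullet> \<alpha> x) / (v \<bullet> v)) has_real_derivative (v \<bullet> a x) / (v \<bullet> v)) (at x)"
      using DERIV_cdivide[OF vd_inner_const[OF da[OF x], of v], of "v \<bullet> v"] by simp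
    have "(h has_vector_derivative a x - ((v \<bullet> a x) / (v \<bullet> v)) *\<^sub>R v) (at x)"
      unfolding h_def
      using has_vector_derivative_diff[OF da[OF x] has_vector_derivative_scaleR[OF d1 has_vector_derivative_const[of v]]]
      by simp
    moreover have "a x - ((v \<bullet> a x) / (v \<bullet> v)) *\<^sub>R v = 0"
      using ax[OF x] by (metis diff_self inner_commute)
    ultimately show ?thesis by simp
  qed
  have hc: "h x = h y" if "x \<in> I" "y \<in> I" for x y
    by (rule const_on_interval[OF iI dh that])
  fix p assume "p \<in> (\<lambda>(s, t). \<alpha> s + \<beta> t) ` (I \<times> J)"
  then obtain s t where st: "s \<in> I" "t \<in> J" and p: "p = \<alpha> s + \<beta> t" by auto
  define kk where "kk = v \<bullet> a s"
  have kk: "kk \<noteq> 0"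
  proof
    assume "kk = 0"
    then have "a s = 0" using ax[OF st(1)] by (simp add: kk_def inner_commute)
    then show False using anz st by simp
  qed
  define g where "g = (\<lambda>x. v \<bullet> \<alpha> x)"
  have dg: "(g has_real_derivative kk) (at x)" if "x = s" for x
    unfolding g_def kk_def that by (rule vd_inner_const[OF da[OF st(1)]])
  have cg: "continuous_on I g"
    by (rule continuous_at_imp_continuous_on)
       (use vd_inner_const[OF da, of _ v] DERIV_isCont in \<open>auto simp: g_def\<close>)
  have "g s \<in> interior (g ` I)"
  proof (rule sussmann_open_mapping[OF oI cg st(1) dg[OF refl, unfolded has_field_derivative_def]])
    show "bounded_linear (\<lambda>y. y / kk)" by (rule bounded_linear_divide)
    show "(*) kk \<circ> (\<lambda>y. y / kk) = id" using kk by (auto simp: fun_eq_iff)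
    show "I \<subseteq> I" by simp
    show "s \<in> interior I" using oI st by (simp add: interior_open)
  qed
  then obtain \<epsilon> where \<epsilon>: "\<epsilon> > 0" "ball (g s) \<epsilon> \<subseteq> g ` I" by (auto simp: mem_interior)
  show "\<exists>\<epsilon>>0. \<forall>w. \<bar>w\<bar> < \<epsilon> \<longrightarrow> p + w *\<^sub>R a s0 \<in> (\<lambda>(s, t). \<alpha> s + \<beta> t) ` (I \<times> J)"
  proof (intro exI[of _ "\<epsilon> / (v \<bullet> v)"] conjI allI impI)
    show "\<epsilon> / (v \<bullet> v) > 0" using \<epsilon> vv by simp
    fix w :: real assume w: "\<bar>w\<bar> < \<epsilon> / (v \<bullet> v)"
    have "dist (g s) (g s + w * (v \<bullet> v)) = \<bar>w\<bar> * (v \<bullet> v)" using vv by (simp add: dist_real_def abs_mult)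
    also have "\<dots> < \<epsilon>" using w vv by (simp add: pos_less_divide_eq)
    finally have "g s + w * (v \<bullet> v) \<in> ball (g s) \<epsilon>" by simp
    then have "g s + w * (v \<bullet> v) \<in> g ` I" by (rule subsetD[OF \<epsilon>(2)])
    then obtain x where x: "x \<in> I" and gx': "g s + w * (v \<bullet> v) = g x" by (rule imageE)
    have ax_eq: "\<alpha> y = h y + (g y / (v \<bullet> v)) *\<^sub>R v" for y unfolding h_def g_def by simp
    have "\<alpha> x = h s + (g x / (v \<bullet> v)) *\<^sub>R v" using ax_eq[of x] hc[OF x st(1)] by simp
    also have "\<dots> = h s + (g s / (v \<bullet> v)) *\<^sub>R v + w *\<^sub>R v"
      unfolding gx'[symmetric] using vv by (simp add: add_divide_distrib scaleR_add_left)
    also have "\<dots> = \<alpha> s + w *\<^sub>R v" using ax_eq[of s] by simp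
    finally have "p + w *\<^sub>R a s0 = \<alpha> x + \<beta> t" unfolding p v_def by simp
    then show "p + w *\<^sub>R a s0 \<in> (\<lambda>(s, t). \<alpha> s + \<beta> t) ` (I \<times> J)" using x st(2)
      by (simp add: image_iff) (metis mem_Sigma_iff case_prod_conv)
  qed
qed

lemma image_swap_sum:
  "(\<lambda>(s, t). \<alpha> s + \<beta> t) ` (I \<times> J) = (\<lambda>(t, s). \<beta> t + \<alpha> s) ` (J \<times> I)"
  for \<alpha> \<beta> :: "real \<Rightarrow> real^3"
  by (auto simp: image_iff add.commute)

lemma part1:
  fixes \<alpha> \<beta> a A b B :: "real \<Rightarrow> real^3"
  assumes oI: "open I" and iI: "is_interval I" and oJ: "open J" and iJ: "is_interval J"
    and neI: "I \<noteq> {}" and neJ: "J \<noteq> {}"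
    and da: "\<And>x. x \<in> I \<Longrightarrow> (\<alpha> has_vector_derivative a x) (at x)"
    and dA: "\<And>x. x \<in> I \<Longrightarrow> (a has_vector_derivative A x) (at x)"
    and db: "\<And>x. x \<in> J \<Longrightarrow> (\<beta> has_vector_derivative b x) (at x)"
    and dB: "\<And>x. x \<in> J \<Longrightarrow> (b has_vector_derivative B x) (at x)"
    and ca: "continuous_on I a" and cA: "continuous_on I A"
    and cb: "continuous_on J b" and cB: "continuous_on J B"
    and reg: "\<And>s t. s \<in> I \<Longrightarrow> t \<in> J \<Longrightarrow> cross3 (a s) (b t) \<noteq> 0"
    and K0: "\<And>s t. s \<in> I \<Longrightarrow> t \<in> J \<Longrightarrow>
              (A s \<bullet> cross3 (a s) (b t)) * (B t \<bullet> cross3 (a s) (b t)) = 0"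
  shows "cylindrical_surface ((\<lambda>(s, t). \<alpha> s + \<beta> t) ` (I \<times> J))"
proof -
  obtain s1 where s1: "s1 \<in> I" using neI by auto
  obtain t1 where t1: "t1 \<in> J" using neJ by auto
  have anz: "a s \<noteq> 0" if "s \<in> I" for s using reg[OF that t1] by auto
  have bnz: "b t \<noteq> 0" if "t \<in> J" for t using reg[OF s1 that] by auto
  show ?thesis
  proof (cases "\<forall>s\<in>I. cross3 (a s) (A s) = 0")
    case True
    then show ?thesis using straight_cyl[OF oI iI da dA _ anz s1] by blast
  next
    case False
    then obtain s0 where s0: "s0 \<in> I" "cross3 (a s0) (A s0) \<noteq> 0" by blast
    show ?thesis
    proof (cases "\<forall>t\<in>J. cross3 (b t) (B t) = 0")
      case True
      show ?thesis unfolding image_swap_sum[of \<alpha> \<beta> I J]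
        by (rule straight_cyl[OF oJ iJ db dB _ bnz t1]) (use True in auto)
    next
      case False
      then obtain t0 where t0: "t0 \<in> J" "cross3 (b t0) (B t0) \<noteq> 0" by blast
      define n where "n = cross3 (a s0) (A s0)"
      define m where "m = cross3 (b t0) (B t0)"
      have nb: "\<forall>t\<in>J. n \<bullet> b t = 0" unfolding n_def
        by (rule step1[OF oI dA ca cA oJ iJ dB cb bnz K0 s0 t0])
      have K0': "(B t \<bullet> cross3 (b t) (a s)) * (A s \<bullet> cross3 (b t) (a s)) = 0"
        if "t \<in> J" "s \<in> I" for s t
        using K0[OF that(2,1)] cross_skew[of "b t" "a s"] by (simp add: mult.commute)
      have ma: "\<forall>s\<in>I. m \<bullet> a s = 0" unfolding m_def
        by (rule step1[OF oJ dB cb cB oI iI dA ca anz K0' t0 s0])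
      have nB: "n \<bullet> B t0 = 0"
        using deriv_zero_local[OF oJ t0(1), of "\<lambda>t. n \<bullet> b t" "n \<bullet> B t0"] nb vd_inner_const[OF dB[OF t0(1)]]
        by auto
      have "cross3 n m = 0" unfolding m_def by (rule perp_two_par[OF nb[rule_format, OF t0(1)] nB])
      moreover have "m \<noteq> 0" using t0 by (simp add: m_def)
      ultimately have nm: "n = ((n \<bullet> m) / (m \<bullet> m)) *\<^sub>R m" by (rule par_expand)
      have na: "n \<bullet> a s = 0" if "s \<in> I" for s
        by (subst nm) (use ma that in simp)
      have "n \<noteq> 0" using s0 by (simp add: n_def)
      moreover have "n \<bullet> a s0 = 0" using na s0 by simp
      ultimately show ?thesis
        using plane_cyl[OF oI iI oJ iJ da db _ na _ reg, where v="a s0"] nb anz[OF s0(1)] by auto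
    qed
  qed
qed

lemma poly_inf_zero:
  fixes p :: "real poly"
  assumes "infinite S" "\<And>x. x \<in> S \<Longrightarrow> poly p x = 0"
  shows "poly p y = 0"
proof -
  have "p = 0"
  proof (rule ccontr)
    assume "p \<noteq> 0"
    then have "finite {x. poly p x = 0}" by (rule poly_roots_finite)
    moreover have "S \<subseteq> {x. poly p x = 0}" using assms(2) by auto
    ultimately show False using assms(1) finite_subset by blast
  qed
  then show ?thesis by simp
qed

lemma sq_prop:
  fixes p0 pt :: "real poly" and \<kappa> :: real
  assumes pos0: "\<And>\<tau>. poly p0 \<tau> > 0" and post: "\<And>\<tau>. poly pt \<tau> > 0"
    and S: "infinite S" and eq: "\<And>\<tau>. \<tau> \<in> S \<Longrightarrow> (poly pt \<tau>)^2 = \<kappa> * (poly p0 \<tau>)^2"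
  shows "poly pt \<tau> * poly p0 0 = poly p0 \<tau> * poly pt 0"
proof -
  obtain \<tau>0 where "\<tau>0 \<in> S" using S by (metis finite.emptyI ex_in_conv)
  then have "\<kappa> = (poly pt \<tau>0)^2 / (poly p0 \<tau>0)^2" using eq[of \<tau>0] pos0[of \<tau>0] by (simp add: field_simps)
  then have k: "\<kappa> \<ge> 0" by simp
  have "poly (pt - smult (sqrt \<kappa>) p0) x = 0" if "x \<in> S" for x
  proof -
    have "sqrt ((poly pt x)^2) = sqrt \<kappa> * sqrt ((poly p0 x)^2)" using eq[OF that] k by (simp add: real_sqrt_mult)
    then show ?thesis using pos0[of x] post[of x] by simp
  qed
  then have "poly (pt - smult (sqrt \<kappa>) p0) x = 0" for x by (rule poly_inf_zero[OF S])
  then have "poly pt x = sqrt \<kappa> * poly p0 x" for x by simp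
  then show ?thesis by (metis mult.commute mult.left_commute)
qed

lemma prop_lemma:
  fixes f01 f02 ft1 ft2 :: real and p0 pt :: "real poly"
  assumes pos0: "\<And>\<tau>. poly p0 \<tau> > 0" and post: "\<And>\<tau>. poly pt \<tau> > 0" and f01: "f01 \<noteq> 0"
    and eq: "\<And>\<tau>. (poly pt \<tau>)^2 * (f01 + f02 * \<tau>) = (poly p0 \<tau>)^2 * (ft1 + ft2 * \<tau>)"
  shows "poly pt \<tau> * poly p0 0 = poly p0 \<tau> * poly pt 0"
proof (cases "f02 = 0")
  case True
  have ft2: "ft2 = 0"
  proof (rule ccontr)
    assume h: "ft2 \<noteq> 0"
    have "(poly pt (- ft1 / ft2))^2 * f01 = 0" using eq[of "- ft1 / ft2"] True h by simp
    then show False using post[of "- ft1 / ft2"] f01 by simp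
  qed
  show ?thesis
  proof (rule sq_prop[OF pos0 post infinite_UNIV_char_0, of "ft1 / f01"])
    fix \<tau> :: real
    show "(poly pt \<tau>)^2 = ft1 / f01 * (poly p0 \<tau>)^2" using eq[of \<tau>] True ft2 f01 by (simp add: field_simps)
  qed
next
  case False
  define r where "r = - f01 / f02"
  have "(poly p0 r)^2 * (ft1 + ft2 * r) = 0" using eq[of r] False by (simp add: r_def)
  then have ftr: "ft1 + ft2 * r = 0" using pos0[of r] by simp
  have inf: "infinite (UNIV - {r})" by (simp add: infinite_UNIV_char_0)
  show ?thesis
  proof (rule sq_prop[OF pos0 post inf, of "ft2 / f02"])
    fix \<tau> :: real assume "\<tau> \<in> UNIV - {r}"
    then have ne: "\<tau> - r \<noteq> 0" by simp
    have e1: "f01 + f02 * \<tau> = f02 * (\<tau> - r)" using False by (simp add: r_def field_simps)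
    have e2: "ft1 + ft2 * \<tau> = ft2 * (\<tau> - r)" using ftr by (simp add: algebra_simps)
    have "(poly pt \<tau>)^2 * f02 * (\<tau> - r) = (poly p0 \<tau>)^2 * ft2 * (\<tau> - r)" using eq[of \<tau>] e1 e2 by (simp add: mult.assoc)
    then have "(poly pt \<tau>)^2 * f02 = (poly p0 \<tau>)^2 * ft2" using ne by simp
    then show "(poly pt \<tau>)^2 = ft2 / f02 * (poly p0 \<tau>)^2" using False by (simp add: field_simps)
  qed
qed

lemma coord_alg:
  fixes b1 b2 b3 B1 B2 B3 :: real
  assumes b3: "b3 \<noteq> 0" and b12: "b1 \<noteq> 0 \<or> b2 \<noteq> 0"
    and eq1: "(2 * (2 * (b1*B1+b2*B2+b3*B3)) - 2 * (b1 + b2) * (B1 + B2)) * ((b1^2+b2^2+b3^2) - b1^2)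
             = (2 * (b1^2+b2^2+b3^2) - (b1 + b2)^2) * (2 * (b1*B1+b2*B2+b3*B3) - 2 * b1 * B1)"
    and eqm: "(2 * (2 * (b1*B1+b2*B2+b3*B3)) - 2 * (b1 - b2) * (B1 - B2)) * ((b1^2+b2^2+b3^2) - b1^2)
             = (2 * (b1^2+b2^2+b3^2) - (b1 - b2)^2) * (2 * (b1*B1+b2*B2+b3*B3) - 2 * b1 * B1)"
  shows "\<exists>L. B1 = L * b1 \<and> B2 = L * b2 \<and> B3 = L * b3"
proof -
  define D where "D = b2^2 + b3^2"
  have D: "D > 0" using b3 by (simp add: D_def add_nonneg_pos)
  define L where "L = (b2*B2 + b3*B3) / D"
  define C1 where "C1 = B1 - L * b1"
  define C2 where "C2 = B2 - L * b2"
  define C3 where "C3 = B3 - L * b3"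
  have h0: "b2 * C2 + b3 * C3 = 0"
  proof -
    have "L * D = b2*B2 + b3*B3" using D by (simp add: L_def)
    then show ?thesis unfolding C2_def C3_def D_def by (simp add: algebra_simps power2_eq_square)
  qed
  have LD: "b2*B2 + b3*B3 = L * D" using D by (simp add: L_def)
  have r1: "2 * (b1*B1+b2*B2+b3*B3) - 2 * b1 * B1 = 2 * L * D"
  proof -
    have "2 * (b1*B1+b2*B2+b3*B3) - 2 * b1 * B1 = 2 * (b2*B2 + b3*B3)" by (simp add: algebra_simps)
    then show ?thesis unfolding LD by simp
  qed
  have r2: "(b1^2+b2^2+b3^2) - b1^2 = D" by (simp add: D_def)
  have e1: "(2 * (2 * (b1*B1+b2*B2+b3*B3)) - 2 * (b1 + b2) * (B1 + B2)) * D = (2 * (b1^2+b2^2+b3^2) - (b1 + b2)^2) * (2 * L * D)"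
    using eq1 unfolding r1 r2 .
  have e1': "2 * (2 * (b1*B1+b2*B2+b3*B3)) - 2 * (b1 + b2) * (B1 + B2) = (2 * (b1^2+b2^2+b3^2) - (b1 + b2)^2) * (2 * L)"
    using e1 D by (metis (no_types, lifting) mult.assoc mult_right_cancel less_irrefl)
  have em: "(2 * (2 * (b1*B1+b2*B2+b3*B3)) - 2 * (b1 - b2) * (B1 - B2)) * D = (2 * (b1^2+b2^2+b3^2) - (b1 - b2)^2) * (2 * L * D)"
    using eqm unfolding r1 r2 .
  have em': "2 * (2 * (b1*B1+b2*B2+b3*B3)) - 2 * (b1 - b2) * (B1 - B2) = (2 * (b1^2+b2^2+b3^2) - (b1 - b2)^2) * (2 * L)"
    using em D by (metis (no_types, lifting) mult.assoc mult_right_cancel less_irrefl)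
  have i1: "2 * (2 * (b1*B1+b2*B2+b3*B3)) - 2 * (b1 + b2) * (B1 + B2) - (2 * (b1^2+b2^2+b3^2) - (b1 + b2)^2) * (2 * L)
      = 2 * (b1*C1 + b2*C2 + 2*b3*C3 - b1*C2 - b2*C1)"
    unfolding C1_def C2_def C3_def by algebra
  have im: "2 * (2 * (b1*B1+b2*B2+b3*B3)) - 2 * (b1 - b2) * (B1 - B2) - (2 * (b1^2+b2^2+b3^2) - (b1 - b2)^2) * (2 * L)
      = 2 * (b1*C1 + b2*C2 + 2*b3*C3 + b1*C2 + b2*C1)"
    unfolding C1_def C2_def C3_def by algebra
  have s1: "b1*C1 + b2*C2 + 2*b3*C3 - b1*C2 - b2*C1 = 0" using i1 e1' by simp
  have s2: "b1*C1 + b2*C2 + 2*b3*C3 + b1*C2 + b2*C1 = 0" using im em' by simp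
  have k: "b1 * C1 = b2 * C2" using s1 s2 h0 by linarith
  have x: "b1 * C2 + b2 * C1 = 0" using s1 s2 by linarith
  have "b1^2*(b2*C2) + b2^2*(b1*C1) = b1*b2*(b1*C2+b2*C1)" by (simp add: algebra_simps power2_eq_square)
  then have "b1^2*(b2*C2) + b2^2*(b2*C2) = 0" using x k by simp
  then have z: "(b1^2+b2^2)*(b2*C2) = 0" by (simp add: algebra_simps)
  have "b1^2+b2^2 > 0" using b12 by (auto simp: add_pos_nonneg add_nonneg_pos)
  then have b2C2: "b2 * C2 = 0" using z by (metis mult_eq_0_iff less_irrefl)
  then have b1C1: "b1 * C1 = 0" using k by simp
  have C3: "C3 = 0" using h0 b2C2 b3 by simp
  have C12: "C1 = 0 \<and> C2 = 0"
  proof (cases "b2 = 0")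
    case True
    then have "b1 \<noteq> 0" using b12 by simp
    then show ?thesis using b1C1 x True by simp
  next
    case False
    then show ?thesis using b2C2 x b1C1 by (cases "b1 = 0") auto
  qed
  show ?thesis using C12 C3 unfolding C1_def C2_def C3_def by (intro exI[of _ L]) simp
qed

lemma frame:
  fixes n e1 :: "real^3"
  assumes n1: "n \<bullet> n = 1" and e11: "e1 \<bullet> e1 = 1" and e1n: "e1 \<bullet> n = 0"
  shows "cross3 n e1 \<bullet> cross3 n e1 = 1" "cross3 n e1 \<bullet> n = 0" "cross3 n e1 \<bullet> e1 = 0"
    "cross3 e1 (cross3 n e1) = n" "cross3 (cross3 n e1) e1 = - n"
    "\<And>q. q = (q \<bullet> e1) *\<^sub>R e1 + (q \<bullet> cross3 n e1) *\<^sub>R cross3 n e1 + (q \<bullet> n) *\<^sub>R n"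
    "\<And>q q'. q \<bullet> q' = (q \<bullet> e1) * (q' \<bullet> e1) + (q \<bullet> cross3 n e1) * (q' \<bullet> cross3 n e1) + (q \<bullet> n) * (q' \<bullet> n)"
proof -
  define e2 where "e2 = cross3 n e1"
  show e22: "cross3 n e1 \<bullet> cross3 n e1 = 1" using lagrange[of n e1] n1 e11 e1n by (simp add: inner_commute)
  show e2n: "cross3 n e1 \<bullet> n = 0" by (simp add: dot_cross_self)
  show e2e1: "cross3 n e1 \<bullet> e1 = 0" by (simp add: dot_cross_self)
  show c12: "cross3 e1 (cross3 n e1) = n" using e11 e1n by (simp add: cross_cross_expand inner_commute)
  then show "cross3 (cross3 n e1) e1 = - n" using cross_skew[of "cross3 n e1" e1] by simp
  have ex: "q = (q \<bullet> e1) *\<^sub>R e1 + (q \<bullet> cross3 n e1) *\<^sub>R cross3 n e1 + (q \<bullet> n) *\<^sub>R n" for q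
  proof -
    define r where "r = q - ((q \<bullet> e1) *\<^sub>R e1 + (q \<bullet> cross3 n e1) *\<^sub>R cross3 n e1 + (q \<bullet> n) *\<^sub>R n)"
    have sym: "n \<bullet> e1 = 0" "e1 \<bullet> cross3 n e1 = 0" "n \<bullet> cross3 n e1 = 0"
      using e1n e2e1 e2n by (simp_all add: inner_commute)
    have "r \<bullet> e1 = 0" unfolding r_def using e11 e1n e2e1 sym
      by (simp add: inner_diff_left inner_add_left)
    moreover have "r \<bullet> n = 0" unfolding r_def using n1 e1n e2n sym
      by (simp add: inner_diff_left inner_add_left)
    moreover have "r \<bullet> cross3 n e1 = 0" unfolding r_def using e22 e1n e2e1 e2n sym
      by (simp add: inner_diff_left inner_add_left)
    moreover have "n \<noteq> 0" "e1 \<noteq> 0" "n \<bullet> e1 = 0" using n1 e11 e1n by (auto simp: inner_commute)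
    ultimately have "r = 0" using zero_from_frame by blast
    then show ?thesis unfolding r_def by simp
  qed
  show "\<And>q. q = (q \<bullet> e1) *\<^sub>R e1 + (q \<bullet> cross3 n e1) *\<^sub>R cross3 n e1 + (q \<bullet> n) *\<^sub>R n" by (rule ex)
  show "q \<bullet> q' = (q \<bullet> e1) * (q' \<bullet> e1) + (q \<bullet> cross3 n e1) * (q' \<bullet> cross3 n e1) + (q \<bullet> n) * (q' \<bullet> n)" for q q'
    apply (subst ex[of q])
    apply (simp only: inner_add_left inner_scaleR_left)
    apply (simp add: inner_commute)
    done
qed

lemma part2_setup:
  fixes a A b B :: "real \<Rightarrow> real^3" and n :: "real^3" and c :: real
  assumes reg: "cross3 (a s) (b t) \<noteq> 0"
    and n1: "n \<bullet> n = 1" and na: "n \<bullet> a s = 0" and nA: "n \<bullet> A s = 0"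
    and c: "c \<noteq> 0"
    and Kc: "(A s \<bullet> cross3 (a s) (b t)) * (B t \<bullet> cross3 (a s) (b t)) / (norm (cross3 (a s) (b t)))^4 = c"
  shows "c * ((a s \<bullet> a s) * (b t \<bullet> b t) - (a s \<bullet> b t)^2)^2
           = (n \<bullet> cross3 (A s) (a s)) * (n \<bullet> b t) * (a s \<bullet> cross3 (b t) (B t))"
    and "n \<bullet> cross3 (A s) (a s) \<noteq> 0" "n \<bullet> b t \<noteq> 0" "a s \<bullet> cross3 (b t) (B t) \<noteq> 0"
proof -
  define P where "P = cross3 (a s) (b t)"
  define W where "W = n \<bullet> cross3 (A s) (a s)"
  define Q where "Q = (a s \<bullet> a s) * (b t \<bullet> b t) - (a s \<bullet> b t)^2"
  have c1: "cross3 (cross3 (A s) (a s)) n = 0"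
    using cross_skew[of "cross3 (A s) (a s)" n] na nA by (simp add: cross_cross_expand)
  have "n \<noteq> 0" using n1 by auto
  from par_expand[OF c1 this] have Aa: "cross3 (A s) (a s) = W *\<^sub>R n"
    using n1 by (simp add: W_def inner_commute)
  have AP: "A s \<bullet> P = W * (n \<bullet> b t)"
  proof -
    have "A s \<bullet> P = b t \<bullet> cross3 (A s) (a s)" unfolding P_def by (metis triple_cyc)
    then show ?thesis using Aa by (simp add: inner_commute)
  qed
  have BP: "B t \<bullet> P = a s \<bullet> cross3 (b t) (B t)" unfolding P_def by (metis triple_cyc)
  have PQ: "(norm P)^2 = Q" unfolding Q_def P_def using lagrange[of "a s" "b t"] by (simp add: power2_norm_eq_inner)
  have Pnz: "norm P \<noteq> 0" using reg by (simp add: P_def)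
  have P4: "(norm P)^4 = Q^2" using PQ by (metis power_mult numeral_Bit0 mult_2 numeral_One power_even_eq) 
  have Qnz: "Q \<noteq> 0" using PQ Pnz by auto
  have "(A s \<bullet> P) * (B t \<bullet> P) / Q^2 = c" using Kc P4 unfolding P_def[symmetric] by simp
  then have "(A s \<bullet> P) * (B t \<bullet> P) = c * Q^2" using Qnz by (simp add: field_simps)
  then have E: "c * Q^2 = W * (n \<bullet> b t) * (a s \<bullet> cross3 (b t) (B t))" using AP BP by simp
  then show "c * ((a s \<bullet> a s) * (b t \<bullet> b t) - (a s \<bullet> b t)^2)^2
           = (n \<bullet> cross3 (A s) (a s)) * (n \<bullet> b t) * (a s \<bullet> cross3 (b t) (B t))"
    unfolding Q_def W_def .
  have "c * Q^2 \<noteq> 0" using c Qnz by simp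
  then show "n \<bullet> cross3 (A s) (a s) \<noteq> 0" "n \<bullet> b t \<noteq> 0" "a s \<bullet> cross3 (b t) (B t) \<noteq> 0"
    using E unfolding W_def by auto
qed

lemma part2_case1:
  fixes b B :: "real \<Rightarrow> real^3" and n :: "real^3"
  assumes oJ: "open J" and t1: "t1 \<in> J"
    and dB: "\<And>x. x \<in> J \<Longrightarrow> (b has_vector_derivative B x) (at x)"
    and n1: "n \<bullet> n = 1" and par: "\<And>t. t \<in> J \<Longrightarrow> cross3 (b t) n = 0"
  shows "cross3 (b t1) (B t1) = 0"
proof -
  have "n \<noteq> 0" using n1 by auto
  then have bt: "b t = (b t \<bullet> n) *\<^sub>R n" if "t \<in> J" for t using par_expand[OF par[OF that]] n1 by simp
  define r where "r = B t1 - (n \<bullet> B t1) *\<^sub>R n"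
  have "n \<bullet> r = 0" unfolding r_def using n1 by (simp add: inner_diff_right)
  then have rn: "r \<bullet> n = 0" by (simp only: inner_commute)
  have rb: "r \<bullet> b t = 0" if "t \<in> J" for t
    by (subst bt[OF that]) (simp add: rn)
  have "r \<bullet> B t1 = 0"
    using deriv_zero_local[OF oJ t1, of "\<lambda>t. r \<bullet> b t" "r \<bullet> B t1"] rb vd_inner_const[OF dB[OF t1], of r] by auto
  moreover have "r \<bullet> B t1 = r \<bullet> r"
  proof -
    have "B t1 = r + (n \<bullet> B t1) *\<^sub>R n" unfolding r_def by simp
    then have "r \<bullet> B t1 = r \<bullet> (r + (n \<bullet> B t1) *\<^sub>R n)" by simp
    also have "\<dots> = r \<bullet> r" using rn by (simp add: inner_add_right inner_commute)
    finally show ?thesis .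
  qed
  ultimately have "r = 0" by simp
  then have Bn: "B t1 = (n \<bullet> B t1) *\<^sub>R n" unfolding r_def by simp
  have "cross3 (b t1) (B t1) = cross3 ((b t1 \<bullet> n) *\<^sub>R n) ((n \<bullet> B t1) *\<^sub>R n)"
    using bt[OF t1] Bn by metis
  then show ?thesis by (simp add: cross_mult_left cross_mult_right)
qed

lemma tau_infinite:
  fixes a A :: "real \<Rightarrow> real^3" and e1 e2 :: "real^3"
  assumes oI: "open I" and s1: "s1 \<in> I"
    and dA: "\<And>x. x \<in> I \<Longrightarrow> (a has_vector_derivative A x) (at x)"
    and ca: "continuous_on I a"
    and x1: "e1 \<bullet> a s1 \<noteq> 0" and y1: "e2 \<bullet> a s1 = 0" and A2: "e2 \<bullet> A s1 \<noteq> 0"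
  obtains U where "open U" "s1 \<in> U" "U \<subseteq> I" "\<And>s. s \<in> U \<Longrightarrow> e1 \<bullet> a s \<noteq> 0"
    "infinite ((\<lambda>s. (e2 \<bullet> a s) / (e1 \<bullet> a s)) ` U)"
proof -
  have cx: "continuous_on I (\<lambda>s. e1 \<bullet> a s)" by (intro continuous_intros ca)
  obtain d where d: "d > 0" "ball s1 d \<subseteq> I" "\<forall>s\<in>ball s1 d. e1 \<bullet> a s \<noteq> 0"
    using avoid_ball[OF cx oI s1 x1] by blast
  define U where "U = ball s1 d"
  define \<tau> where "\<tau> = (\<lambda>s. (e2 \<bullet> a s) / (e1 \<bullet> a s))"
  have dt: "(\<tau> has_real_derivative
      ((e2 \<bullet> A s) * (e1 \<bullet> a s) - (e2 \<bullet> a s) * (e1 \<bullet> A s)) / ((e1 \<bullet> a s) * (e1 \<bullet> a s))) (at s)"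
    if "s \<in> U" for s
    unfolding \<tau>_def
    by (rule DERIV_divide[OF vd_inner_const[OF dA] vd_inner_const[OF dA]])
       (use that d U_def in auto)
  have ct: "continuous_on U \<tau>"
    by (rule continuous_at_imp_continuous_on) (use dt DERIV_isCont in blast)
  have conn: "connected (\<tau> ` U)" unfolding U_def
    by (rule connected_continuous_image[OF ct[unfolded U_def] connected_ball])
  have "infinite (\<tau> ` U)"
  proof
    assume fin: "finite (\<tau> ` U)"
    have "\<tau> s1 \<in> \<tau> ` U" using d U_def by auto
    then have "\<tau> ` U = {\<tau> s1}" using connected_finite_iff_sing[OF conn] fin by (metis empty_iff singletonD)
    then have t0: "\<tau> s = 0" if "s \<in> U" for s
    proof -
      have "\<tau> s \<in> \<tau> ` U" using that by blast
      then show ?thesis using \<open>\<tau> ` U = {\<tau> s1}\<close> y1 by (simp add: \<tau>_def)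
    qed
    have "((e2 \<bullet> A s1) * (e1 \<bullet> a s1) - (e2 \<bullet> a s1) * (e1 \<bullet> A s1)) / ((e1 \<bullet> a s1) * (e1 \<bullet> a s1)) = 0"
    proof (rule deriv_zero_local[of U s1 \<tau>])
      show "open U" "s1 \<in> U" using d U_def by auto
      show "\<And>y. y \<in> U \<Longrightarrow> \<tau> y = 0" by (rule t0)
      show "(\<tau> has_real_derivative ((e2 \<bullet> A s1) * (e1 \<bullet> a s1) - (e2 \<bullet> a s1) * (e1 \<bullet> A s1)) / ((e1 \<bullet> a s1) * (e1 \<bullet> a s1))) (at s1)"
        using dt d U_def by auto
    qed
    then show False using x1 y1 A2 by simp
  qed
  then show ?thesis using that[of U] d U_def by (auto simp: \<tau>_def)
qed

lemma part2_case2: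
  fixes a A b B :: "real \<Rightarrow> real^3" and n :: "real^3" and c :: real
  assumes oI: "open I" and oJ: "open J" and s1: "s1 \<in> I" and t0: "t0 \<in> J"
    and dA: "\<And>x. x \<in> I \<Longrightarrow> (a has_vector_derivative A x) (at x)"
    and dB: "\<And>x. x \<in> J \<Longrightarrow> (b has_vector_derivative B x) (at x)"
    and ca: "continuous_on I a"
    and n1: "n \<bullet> n = 1" and na: "\<And>s. s \<in> I \<Longrightarrow> n \<bullet> a s = 0" and nA: "\<And>s. s \<in> I \<Longrightarrow> n \<bullet> A s = 0"
    and c: "c \<noteq> 0"
    and E: "\<And>s t. s \<in> I \<Longrightarrow> t \<in> J \<Longrightarrow> c * ((a s \<bullet> a s) * (b t \<bullet> b t) - (a s \<bullet> b t)^2)^2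
           = (n \<bullet> cross3 (A s) (a s)) * (n \<bullet> b t) * (a s \<bullet> cross3 (b t) (B t))"
    and nzW: "\<And>s. s \<in> I \<Longrightarrow> n \<bullet> cross3 (A s) (a s) \<noteq> 0"
    and nzz: "\<And>t. t \<in> J \<Longrightarrow> n \<bullet> b t \<noteq> 0"
    and nzm: "\<And>s t. s \<in> I \<Longrightarrow> t \<in> J \<Longrightarrow> a s \<bullet> cross3 (b t) (B t) \<noteq> 0"
    and bt0: "cross3 (b t0) n \<noteq> 0"
  shows False
proof -
  define W where "W s = n \<bullet> cross3 (A s) (a s)" for s
  define m where "m t = cross3 (b t) (B t)" for t
  have as1: "a s1 \<noteq> 0" using nzm[OF s1 t0] by auto
  define e1 where "e1 = (1 / norm (a s1)) *\<^sub>R a s1"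
  define e2 where "e2 = cross3 n e1"
  have na1: "norm (a s1) \<noteq> 0" using as1 by simp
  have e11: "e1 \<bullet> e1 = 1" using na1
    by (simp add: e1_def dot_square_norm power2_eq_square)
  have e1n: "e1 \<bullet> n = 0" using na[OF s1] by (simp add: e1_def inner_commute)
  note fr = frame[OF n1 e11 e1n, folded e2_def]
  have ex: "\<And>q. q = (q \<bullet> e1) *\<^sub>R e1 + (q \<bullet> e2) *\<^sub>R e2 + (q \<bullet> n) *\<^sub>R n" by (rule fr(6))
  have ip: "\<And>q q'. q \<bullet> q' = (q \<bullet> e1) * (q' \<bullet> e1) + (q \<bullet> e2) * (q' \<bullet> e2) + (q \<bullet> n) * (q' \<bullet> n)" by (rule fr(7))
  have a1: "a s1 = norm (a s1) *\<^sub>R e1" using na1 by (simp add: e1_def)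
  have x1: "e1 \<bullet> a s1 = norm (a s1)" by (subst a1) (simp add: e11)
  have e12: "e1 \<bullet> e2 = 0" using fr(3) by (simp add: inner_commute)
  have y1: "e2 \<bullet> a s1 = 0" by (subst a1) (simp add: fr(3))
  have A2: "e2 \<bullet> A s1 \<noteq> 0"
  proof
    assume h: "e2 \<bullet> A s1 = 0"
    have "A s1 = (A s1 \<bullet> e1) *\<^sub>R e1" using ex[of "A s1"] h nA[OF s1] by (simp add: inner_commute)
    then have "cross3 (A s1) (a s1) = 0"
      by (metis a1 cross_mult_left cross_mult_right cross_refl scaleR_zero_right)
    then show False using nzW[OF s1] by simp
  qed
  obtain U where U: "open U" "s1 \<in> U" "U \<subseteq> I" "\<And>s. s \<in> U \<Longrightarrow> e1 \<bullet> a s \<noteq> 0"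
    and Uinf: "infinite ((\<lambda>s. (e2 \<bullet> a s) / (e1 \<bullet> a s)) ` U)"
  proof -
    have "e1 \<bullet> a s1 \<noteq> 0" using x1 na1 by simp
    from tau_infinite[OF oI s1 dA ca this y1 A2] show ?thesis using that by blast
  qed
  define pG where "pG w = [: w \<bullet> w - (w \<bullet> e1)^2, -2 * (w \<bullet> e1) * (w \<bullet> e2), w \<bullet> w - (w \<bullet> e2)^2 :]" for w
  have pGe: "poly (pG w) \<tau> = (1 + \<tau>^2) * (w \<bullet> w) - ((w \<bullet> e1) + \<tau> * (w \<bullet> e2))^2" for w \<tau>
    by (simp add: pG_def algebra_simps power2_eq_square)
  define F1 where "F1 t = (n \<bullet> b t) * (m t \<bullet> e1)" for t
  define F2 where "F2 t = (n \<bullet> b t) * (m t \<bullet> e2)" for t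
  have key: "c * (e1 \<bullet> a s)^4 * (poly (pG (b t)) ((e2 \<bullet> a s) / (e1 \<bullet> a s)))^2
      = W s * (e1 \<bullet> a s) * (F1 t + F2 t * ((e2 \<bullet> a s) / (e1 \<bullet> a s)))" if s: "s \<in> U" and t: "t \<in> J" for s t
  proof -
    define x where "x = e1 \<bullet> a s"
    define y where "y = e2 \<bullet> a s"
    define \<tau> where "\<tau> = y / x"
    have sI: "s \<in> I" using s U by auto
    have xnz: "x \<noteq> 0" using U(4)[OF s] by (simp add: x_def)
    have yx: "y = \<tau> * x" using xnz by (simp add: \<tau>_def)
    have nas: "a s \<bullet> n = 0" using na[OF sI] by (simp add: inner_commute)
    have aa: "a s \<bullet> a s = x * x + y * y" using ip[of "a s" "a s"] nas by (simp add: x_def y_def inner_commute)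
    have ab: "a s \<bullet> b t = x * (b t \<bullet> e1) + y * (b t \<bullet> e2)" using ip[of "a s" "b t"] nas by (simp add: x_def y_def inner_commute)
    have am: "a s \<bullet> m t = x * (m t \<bullet> e1) + y * (m t \<bullet> e2)" using ip[of "a s" "m t"] nas by (simp add: x_def y_def inner_commute)
    have Qx: "(a s \<bullet> a s) * (b t \<bullet> b t) - (a s \<bullet> b t)^2 = x^2 * poly (pG (b t)) \<tau>"
      unfolding pGe aa ab yx by (simp add: power2_eq_square algebra_simps)
    have amx: "(n \<bullet> b t) * (a s \<bullet> m t) = x * (F1 t + F2 t * \<tau>)"
      unfolding am yx F1_def F2_def by (simp add: algebra_simps)
    have "c * (x^2 * poly (pG (b t)) \<tau>)^2 = W s * ((n \<bullet> b t) * (a s \<bullet> m t))"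
      using E[OF sI t] unfolding Qx by (simp add: W_def m_def mult.assoc)
    then show ?thesis unfolding amx x_def[symmetric] y_def[symmetric] \<tau>_def[symmetric]
      by (simp add: power_mult_distrib power2_eq_square power4_eq_xxxx mult.assoc mult.left_commute)
  qed
  have ident: "(poly (pG (b t)) \<tau>)^2 * (F1 t0 + F2 t0 * \<tau>) = (poly (pG (b t0)) \<tau>)^2 * (F1 t + F2 t * \<tau>)"
    if t: "t \<in> J" for t \<tau>
  proof -
    define p where "p = (pG (b t))^2 * [: F1 t0, F2 t0 :] - (pG (b t0))^2 * [: F1 t, F2 t :]"
    have pe: "poly p \<tau>' = (poly (pG (b t)) \<tau>')^2 * (F1 t0 + F2 t0 * \<tau>') - (poly (pG (b t0)) \<tau>')^2 * (F1 t + F2 t * \<tau>')" for \<tau>'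
      by (simp add: p_def poly_power algebra_simps)
    have "poly p \<tau>' = 0" if "\<tau>' \<in> (\<lambda>s. (e2 \<bullet> a s) / (e1 \<bullet> a s)) ` U" for \<tau>'
    proof -
      from that obtain s where s: "s \<in> U" and tau: "\<tau>' = (e2 \<bullet> a s) / (e1 \<bullet> a s)" by (rule imageE)
      define x where "x = e1 \<bullet> a s"
      have xnz: "x \<noteq> 0" using U(4)[OF s] by (simp add: x_def)
      have k1: "c * x^4 * (poly (pG (b t)) \<tau>')^2 = W s * x * (F1 t + F2 t * \<tau>')"
        using key[OF s t] unfolding tau x_def .
      have k2: "c * x^4 * (poly (pG (b t0)) \<tau>')^2 = W s * x * (F1 t0 + F2 t0 * \<tau>')"
        using key[OF s t0] unfolding tau x_def .
      have "c * x^4 * poly p \<tau>' = (c * x^4 * (poly (pG (b t)) \<tau>')^2) * (F1 t0 + F2 t0 * \<tau>')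
             - (c * x^4 * (poly (pG (b t0)) \<tau>')^2) * (F1 t + F2 t * \<tau>')"
        unfolding pe by (simp add: algebra_simps)
      also have "\<dots> = (W s * x * (F1 t + F2 t * \<tau>')) * (F1 t0 + F2 t0 * \<tau>')
             - (W s * x * (F1 t0 + F2 t0 * \<tau>')) * (F1 t + F2 t * \<tau>')"
        by (simp only: k1 k2)
      also have "\<dots> = 0" by (simp add: algebra_simps)
      finally show ?thesis using c xnz by simp
    qed
    then have "poly p \<tau> = 0" by (rule poly_inf_zero[OF Uinf])
    then show ?thesis unfolding pe by simp
  qed
  have pos: "poly (pG (b t)) \<tau> > 0" if t: "t \<in> J" for t \<tau>
  proof -
    have bb: "b t \<bullet> b t = (b t \<bullet> e1)^2 + (b t \<bullet> e2)^2 + (b t \<bullet> n)^2"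
      using ip[of "b t" "b t"] by (simp add: power2_eq_square)
    have "poly (pG (b t)) \<tau> = ((b t \<bullet> e2) - \<tau> * (b t \<bullet> e1))^2 + (1 + \<tau>^2) * (b t \<bullet> n)^2"
      unfolding pGe bb by (simp add: power2_eq_square algebra_simps)
    moreover have "(b t \<bullet> n)^2 > 0" using nzz[OF t] by (simp add: inner_commute)
    moreover have "(1 + \<tau>^2) > 0" by (simp add: add_pos_nonneg)
    ultimately show ?thesis by (simp add: add_nonneg_pos)
  qed
  have F10: "F1 t0 \<noteq> 0"
  proof -
    have "a s1 \<bullet> m t0 = norm (a s1) * (m t0 \<bullet> e1)" by (subst a1) (simp add: inner_commute)
    then have "m t0 \<bullet> e1 \<noteq> 0" using nzm[OF s1 t0] by (auto simp: m_def)
    then show ?thesis using nzz[OF t0] by (simp add: F1_def)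
  qed
  have propG: "poly (pG (b t)) \<tau> * poly (pG (b t0)) 0 = poly (pG (b t0)) \<tau> * poly (pG (b t)) 0"
    if t: "t \<in> J" for t \<tau>
    by (rule prop_lemma[OF pos[OF t0] pos[OF t] F10 ident[OF t]])
  define G0 where "G0 \<tau> = poly (pG (b t0)) \<tau>" for \<tau>
  define b1 where "b1 = b t0 \<bullet> e1"
  define b2 where "b2 = b t0 \<bullet> e2"
  define b3 where "b3 = b t0 \<bullet> n"
  define B1 where "B1 = B t0 \<bullet> e1"
  define B2 where "B2 = B t0 \<bullet> e2"
  define B3 where "B3 = B t0 \<bullet> n"
  define gd where "gd \<tau> = (1 + \<tau>^2) * (b t0 \<bullet> B t0 + B t0 \<bullet> b t0)
        - of_nat 2 * (((B t0 \<bullet> e1) + \<tau> * (B t0 \<bullet> e2)) * ((b t0 \<bullet> e1) + \<tau> * (b t0 \<bullet> e2)) ^ (2 - Suc 0))" for \<tau>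
  have dg: "((\<lambda>t. poly (pG (b t)) \<tau>) has_real_derivative gd \<tau>) (at t0)" for \<tau>
  proof -
    have d1: "((\<lambda>t. b t \<bullet> b t) has_real_derivative (b t0 \<bullet> B t0 + B t0 \<bullet> b t0)) (at t0)"
      by (rule vd_inner[OF dB[OF t0] dB[OF t0]])
    have d2: "((\<lambda>t. b t \<bullet> e1) has_real_derivative (B t0 \<bullet> e1)) (at t0)"
      using vd_inner[OF dB[OF t0] has_vector_derivative_const[of e1]] by simp
    have d3: "((\<lambda>t. b t \<bullet> e2) has_real_derivative (B t0 \<bullet> e2)) (at t0)"
      using vd_inner[OF dB[OF t0] has_vector_derivative_const[of e2]] by simp
    have d4: "((\<lambda>t. (b t \<bullet> e1) + \<tau> * (b t \<bullet> e2)) has_real_derivative ((B t0 \<bullet> e1) + \<tau> * (B t0 \<bullet> e2))) (at t0)"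
      by (intro DERIV_add d2 DERIV_cmult d3)
    have "((\<lambda>t. (1 + \<tau>^2) * (b t \<bullet> b t) - ((b t \<bullet> e1) + \<tau> * (b t \<bullet> e2))^2) has_real_derivative gd \<tau>) (at t0)"
      unfolding gd_def by (intro DERIV_diff DERIV_cmult d1 DERIV_power d4)
    then show ?thesis unfolding pGe .
  qed
  have deq: "gd \<tau> * G0 0 = G0 \<tau> * gd 0" for \<tau>
  proof -
    have l: "((\<lambda>t. poly (pG (b t)) \<tau> * G0 0) has_real_derivative gd \<tau> * G0 0) (at t0)"
      by (rule DERIV_cmult_right[OF dg])
    have r: "((\<lambda>t. G0 \<tau> * poly (pG (b t)) 0) has_real_derivative G0 \<tau> * gd 0) (at t0)"
      by (rule DERIV_cmult[OF dg])
    have l': "((\<lambda>t. G0 \<tau> * poly (pG (b t)) 0) has_real_derivative gd \<tau> * G0 0) (at t0)"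
      by (rule has_field_derivative_transform_within_open[OF l oJ t0]) (use propG in \<open>simp add: G0_def\<close>)
    show ?thesis using DERIV_unique[OF l' r] .
  qed
  have bb: "b t0 \<bullet> b t0 = b1^2 + b2^2 + b3^2"
    using ip[of "b t0" "b t0"] by (simp add: power2_eq_square b1_def b2_def b3_def)
  have bB: "b t0 \<bullet> B t0 = b1*B1 + b2*B2 + b3*B3"
    using ip[of "b t0" "B t0"] by (simp add: b1_def b2_def b3_def B1_def B2_def B3_def)
  have Bb: "B t0 \<bullet> b t0 = b1*B1 + b2*B2 + b3*B3" using bB by (simp add: inner_commute)
  have eq1: "(2 * (2 * (b1*B1+b2*B2+b3*B3)) - 2 * (b1 + b2) * (B1 + B2)) * ((b1^2+b2^2+b3^2) - b1^2)
             = (2 * (b1^2+b2^2+b3^2) - (b1 + b2)^2) * (2 * (b1*B1+b2*B2+b3*B3) - 2 * b1 * B1)"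
    using deq[of 1] unfolding gd_def G0_def pGe bb bB Bb
    by (simp add: b1_def[symmetric] b2_def[symmetric] B1_def[symmetric] B2_def[symmetric] algebra_simps power2_eq_square)
  have eqm: "(2 * (2 * (b1*B1+b2*B2+b3*B3)) - 2 * (b1 - b2) * (B1 - B2)) * ((b1^2+b2^2+b3^2) - b1^2)
             = (2 * (b1^2+b2^2+b3^2) - (b1 - b2)^2) * (2 * (b1*B1+b2*B2+b3*B3) - 2 * b1 * B1)"
    using deq[of "-1"] unfolding gd_def G0_def pGe bb bB Bb
    by (simp add: b1_def[symmetric] b2_def[symmetric] B1_def[symmetric] B2_def[symmetric] algebra_simps power2_eq_square)
  have b3nz: "b3 \<noteq> 0" using nzz[OF t0] by (simp add: b3_def inner_commute)
  have b12: "b1 \<noteq> 0 \<or> b2 \<noteq> 0"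
  proof (rule ccontr)
    assume "\<not> (b1 \<noteq> 0 \<or> b2 \<noteq> 0)"
    then have "b t0 = b3 *\<^sub>R n" using ex[of "b t0"] by (simp add: b1_def b2_def b3_def)
    then have "cross3 (b t0) n = 0" by (simp add: cross_mult_left)
    then show False using bt0 by simp
  qed
  obtain L where L: "B1 = L * b1" "B2 = L * b2" "B3 = L * b3"
    using coord_alg[OF b3nz b12 eq1 eqm] by blast
  have "B t0 = L *\<^sub>R b t0"
    using ex[of "B t0"] ex[of "b t0"] L
    by (simp add: B1_def[symmetric] B2_def[symmetric] B3_def[symmetric] b1_def[symmetric] b2_def[symmetric] b3_def[symmetric] scaleR_add_right)
  then have "cross3 (b t0) (B t0) = 0" by (simp add: cross_mult_right)
  then show False using nzm[OF s1 t0] by simp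
qed

lemma smooth_derivs:
  fixes f :: "real \<Rightarrow> real^3"
  assumes "smooth_curve_on I f" "open I"
  obtains a A where "\<And>x. x \<in> I \<Longrightarrow> (f has_vector_derivative a x) (at x)"
    "\<And>x. x \<in> I \<Longrightarrow> (a has_vector_derivative A x) (at x)"
    "continuous_on I a" "continuous_on I A"
proof -
  obtain D :: "nat \<Rightarrow> real \<Rightarrow> real^3" where D0: "\<forall>x\<in>I. D 0 x = f x"
    and Dk: "\<forall>k. \<forall>x\<in>I. (D k has_vector_derivative D (Suc k) x) (at x)"
    using assms(1) unfolding smooth_curve_on_def by blast
  have df: "(f has_vector_derivative D 1 x) (at x)" if "x \<in> I" for x
    by (rule has_vector_derivative_transform_within_open[OF _ assms(2) that, of "D 0"])
       (use Dk that D0 in auto)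
  have dA: "(D 1 has_vector_derivative D 2 x) (at x)" if "x \<in> I" for x
    using Dk that by (metis One_nat_def Suc_1)
  have d2: "(D 2 has_vector_derivative D 3 x) (at x)" if "x \<in> I" for x
  proof -
    have "(D (Suc (Suc 0)) has_vector_derivative D (Suc (Suc (Suc 0))) x) (at x)" using Dk that by blast
    then show ?thesis by (simp add: numeral_3_eq_3 numeral_2_eq_2)
  qed
  have "continuous_on I (D 1)"
    by (rule continuous_on_vector_derivative) (use dA in \<open>auto intro: has_vector_derivative_at_within\<close>)
  moreover have "continuous_on I (D 2)"
    by (rule continuous_on_vector_derivative) (use d2 in \<open>auto intro: has_vector_derivative_at_within\<close>)
  ultimately show ?thesis using that df dA by blast
qed

lemma planar_derivs:
  fixes f a A :: "real \<Rightarrow> real^3"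
  assumes oI: "open I" and df: "\<And>x. x \<in> I \<Longrightarrow> (f has_vector_derivative a x) (at x)"
    and dA: "\<And>x. x \<in> I \<Longrightarrow> (a has_vector_derivative A x) (at x)"
    and pl: "planar_curve I f"
  obtains n where "n \<bullet> n = 1" "\<And>x. x \<in> I \<Longrightarrow> n \<bullet> a x = 0" "\<And>x. x \<in> I \<Longrightarrow> n \<bullet> A x = 0"
proof -
  obtain n d where n: "n \<noteq> 0" and nd: "\<And>x. x \<in> I \<Longrightarrow> n \<bullet> f x = d"
    using pl unfolding planar_curve_def by blast
  have na: "n \<bullet> a x = 0" if x: "x \<in> I" for x
    using deriv_zero_local[OF oI x, of "\<lambda>x. n \<bullet> f x - d" "n \<bullet> a x"] nd
      DERIV_diff[OF vd_inner_const[OF df[OF x], of n] DERIV_const[of d]] by auto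
  have nA: "n \<bullet> A x = 0" if x: "x \<in> I" for x
    using deriv_zero_local[OF oI x, of "\<lambda>x. n \<bullet> a x" "n \<bullet> A x"] na
      vd_inner_const[OF dA[OF x], of n] by auto
  define nn where "nn = (1 / norm n) *\<^sub>R n"
  have "nn \<bullet> nn = 1" using n by (simp add: nn_def dot_square_norm power2_eq_square)
  moreover have "nn \<bullet> a x = 0" if "x \<in> I" for x using na[OF that] by (simp add: nn_def)
  moreover have "nn \<bullet> A x = 0" if "x \<in> I" for x using nA[OF that] by (simp add: nn_def)
  ultimately show ?thesis using that by blast
qed

lemma part2_full:
  fixes a A b B :: "real \<Rightarrow> real^3" and n :: "real^3" and c :: real
  assumes oI: "open I" and oJ: "open J" and neI: "I \<noteq> {}" and neJ: "J \<noteq> {}"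
    and dA: "\<And>x. x \<in> I \<Longrightarrow> (a has_vector_derivative A x) (at x)"
    and dB: "\<And>x. x \<in> J \<Longrightarrow> (b has_vector_derivative B x) (at x)"
    and ca: "continuous_on I a"
    and n1: "n \<bullet> n = 1" and na: "\<And>s. s \<in> I \<Longrightarrow> n \<bullet> a s = 0" and nA: "\<And>s. s \<in> I \<Longrightarrow> n \<bullet> A s = 0"
    and reg: "\<And>s t. s \<in> I \<Longrightarrow> t \<in> J \<Longrightarrow> cross3 (a s) (b t) \<noteq> 0"
    and c: "c \<noteq> 0"
    and Kc: "\<And>s t. s \<in> I \<Longrightarrow> t \<in> J \<Longrightarrow>
       (A s \<bullet> cross3 (a s) (b t)) * (B t \<bullet> cross3 (a s) (b t)) / (norm (cross3 (a s) (b t)))^4 = c"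
  shows False
proof -
  obtain s1 where s1: "s1 \<in> I" using neI by auto
  obtain t1 where t1: "t1 \<in> J" using neJ by auto
  have S1: "c * ((a s \<bullet> a s) * (b t \<bullet> b t) - (a s \<bullet> b t)^2)^2
           = (n \<bullet> cross3 (A s) (a s)) * (n \<bullet> b t) * (a s \<bullet> cross3 (b t) (B t))"
    and S2: "n \<bullet> cross3 (A s) (a s) \<noteq> 0" and S3: "n \<bullet> b t \<noteq> 0"
    and S4: "a s \<bullet> cross3 (b t) (B t) \<noteq> 0" if "s \<in> I" "t \<in> J" for s t
    using part2_setup[where a=a and A=A and b=b and B=B and s=s and t=t and n=n and c=c, OF reg[OF that] n1 na[OF that(1)] nA[OF that(1)] c Kc[OF that]] by auto
  show False
  proof (cases "\<forall>t\<in>J. cross3 (b t) n = 0")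
    case True
    have "cross3 (b t1) (B t1) = 0" by (rule part2_case1[OF oJ t1 dB n1]) (use True in auto)
    then show False using S4[OF s1 t1] by simp
  next
    case False
    then obtain t0 where t0: "t0 \<in> J" "cross3 (b t0) n \<noteq> 0" by blast
    show False
    proof (rule part2_case2[OF oI oJ s1 t0(1) dA dB ca n1 na nA c _ _ _ _ t0(2)])
      show "\<And>s t. s \<in> I \<Longrightarrow> t \<in> J \<Longrightarrow> c * ((a s \<bullet> a s) * (b t \<bullet> b t) - (a s \<bullet> b t)^2)^2
           = (n \<bullet> cross3 (A s) (a s)) * (n \<bullet> b t) * (a s \<bullet> cross3 (b t) (B t))" by (rule S1)
      show "\<And>s. s \<in> I \<Longrightarrow> n \<bullet> cross3 (A s) (a s) \<noteq> 0" using S2 t1 by blast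
      show "\<And>t. t \<in> J \<Longrightarrow> n \<bullet> b t \<noteq> 0" using S3 s1 by blast
      show "\<And>s t. s \<in> I \<Longrightarrow> t \<in> J \<Longrightarrow> a s \<bullet> cross3 (b t) (B t) \<noteq> 0" by (rule S4)
    qed
  qed
qed

theorem theorem1:
  fixes \<alpha> \<beta> :: "real \<Rightarrow> real^3" and I J :: "real set"
  assumes I: "open I" "is_interval I" "I \<noteq> {}"
      and J: "open J" "is_interval J" "J \<noteq> {}"
      and sa: "smooth_curve_on I \<alpha>" and sb: "smooth_curve_on J \<beta>"
      and reg: "regular_param (\<lambda>s t. \<alpha> s + \<beta> t) I J"
  shows "((\<forall>s\<in>I. \<forall>t\<in>J. gauss_curvature (\<lambda>s t. \<alpha> s + \<beta> t) s t = 0)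
            \<longrightarrow> cylindrical_surface ((\<lambda>(s, t). \<alpha> s + \<beta> t) ` (I \<times> J)))
       \<and> ((planar_curve I \<alpha> \<or> planar_curve J \<beta>)
            \<longrightarrow> \<not> (\<exists>c. c \<noteq> 0 \<and> (\<forall>s\<in>I. \<forall>t\<in>J. gauss_curvature (\<lambda>s t. \<alpha> s + \<beta> t) s t = c)))"
proof -
  obtain a A where da: "\<And>x. x \<in> I \<Longrightarrow> (\<alpha> has_vector_derivative a x) (at x)"
    and dA: "\<And>x. x \<in> I \<Longrightarrow> (a has_vector_derivative A x) (at x)"
    and ca: "continuous_on I a" and cA: "continuous_on I A"
    using smooth_derivs[OF sa I(1)] by blast
  obtain b B where db: "\<And>x. x \<in> J \<Longrightarrow> (\<beta> has_vector_derivative b x) (at x)"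
    and dB: "\<And>x. x \<in> J \<Longrightarrow> (b has_vector_derivative B x) (at x)"
    and cb: "continuous_on J b" and cB: "continuous_on J B"
    using smooth_derivs[OF sb J(1)] by blast
  note gf = gauss_formula[OF I(1) J(1) _ _ da dA db dB]
  have reg': "cross3 (a s) (b t) \<noteq> 0" if "s \<in> I" "t \<in> J" for s t
  proof -
    have "cross3 (Xs (\<lambda>s t. \<alpha> s + \<beta> t) s t) (Xt (\<lambda>s t. \<alpha> s + \<beta> t) s t) \<noteq> 0"
      using reg that unfolding regular_param_def by blast
    then show ?thesis using gf(2)[OF that] gf(3)[OF that] by simp
  qed
  have K: "gauss_curvature (\<lambda>s t. \<alpha> s + \<beta> t) s t =
      (A s \<bullet> cross3 (a s) (b t)) * (B t \<bullet> cross3 (a s) (b t)) / (norm (cross3 (a s) (b t)))^4"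
    if "s \<in> I" "t \<in> J" for s t using gf(1)[OF that] .
  show ?thesis
  proof (intro conjI impI)
    assume K0: "\<forall>s\<in>I. \<forall>t\<in>J. gauss_curvature (\<lambda>s t. \<alpha> s + \<beta> t) s t = 0"
    show "cylindrical_surface ((\<lambda>(s, t). \<alpha> s + \<beta> t) ` (I \<times> J))"
    proof (rule part1[OF I(1,2) J(1,2) I(3) J(3) da dA db dB ca cA cb cB reg'])
      fix s t assume st: "s \<in> I" "t \<in> J"
      have "(A s \<bullet> cross3 (a s) (b t)) * (B t \<bullet> cross3 (a s) (b t)) / (norm (cross3 (a s) (b t)))^4 = 0"
        using K0 K[OF st] st by auto
      then show "(A s \<bullet> cross3 (a s) (b t)) * (B t \<bullet> cross3 (a s) (b t)) = 0"
        using reg'[OF st] by simp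
    qed (auto)
  next
    assume pl: "planar_curve I \<alpha> \<or> planar_curve J \<beta>"
    show "\<not> (\<exists>c. c \<noteq> 0 \<and> (\<forall>s\<in>I. \<forall>t\<in>J. gauss_curvature (\<lambda>s t. \<alpha> s + \<beta> t) s t = c))"
    proof
      assume "\<exists>c. c \<noteq> 0 \<and> (\<forall>s\<in>I. \<forall>t\<in>J. gauss_curvature (\<lambda>s t. \<alpha> s + \<beta> t) s t = c)"
      then obtain c where c: "c \<noteq> 0" and Kc0: "\<forall>s\<in>I. \<forall>t\<in>J. gauss_curvature (\<lambda>s t. \<alpha> s + \<beta> t) s t = c"
        by blast
      have Kc: "(A s \<bullet> cross3 (a s) (b t)) * (B t \<bullet> cross3 (a s) (b t)) / (norm (cross3 (a s) (b t)))^4 = c"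
        if "s \<in> I" "t \<in> J" for s t using Kc0 K[OF that] that by auto
      from pl show False
      proof
        assume "planar_curve I \<alpha>"
        then obtain n where n: "n \<bullet> n = 1" "\<And>x. x \<in> I \<Longrightarrow> n \<bullet> a x = 0" "\<And>x. x \<in> I \<Longrightarrow> n \<bullet> A x = 0"
          using planar_derivs[OF I(1) da dA] by blast
        show False by (rule part2_full[OF I(1) J(1) I(3) J(3) dA dB ca n reg' c Kc])
      next
        assume "planar_curve J \<beta>"
        then obtain n where n: "n \<bullet> n = 1" "\<And>x. x \<in> J \<Longrightarrow> n \<bullet> b x = 0" "\<And>x. x \<in> J \<Longrightarrow> n \<bullet> B x = 0"
          using planar_derivs[OF J(1) db dB] by blast
        have reg'': "cross3 (b t) (a s) \<noteq> 0" if "t \<in> J" "s \<in> I" for s t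
          using reg'[OF that(2,1)] cross_skew[of "b t" "a s"] by auto
        have Kc': "(B t \<bullet> cross3 (b t) (a s)) * (A s \<bullet> cross3 (b t) (a s)) / (norm (cross3 (b t) (a s)))^4 = c"
          if "t \<in> J" "s \<in> I" for s t
          using Kc[OF that(2,1)] cross_skew[of "b t" "a s"] by (simp add: mult.commute)
        show False by (rule part2_full[OF J(1) I(1) J(3) I(3) dB dA cb n reg'' c Kc'])
      qed
    qed
  qed
qed

end
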